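(* Let $A=\mathbb{F}_q[T]$ and $\boldsymbol\omega=(\omega_1,\omega_2,1)\in C_\infty^3$ such that $\omega_1,\omega_2,1$ are orthogonal (i.e. $|x_1\omega_1+x_2\omega_2+x_3|=\max(|x_1\omega_1|,|x_2\omega_2|,|x_3|)$ for all $x_1,x_2,x_3\in K_\infty$) and $|\omega_1|\ge|\omega_2|\ge1$, with $a:=\log\omega_1$ and $b:=\log\omega_2$ integers. Let $\Lambda=A\omega_1+A\omega_2+A$ and $\Delta(\boldsymbol\omega)=\Delta_T(\Lambda)$. Then: (1) if $a=b=0$: $\log\Delta(\boldsymbol\omega)=q^3$; (2) if $a>b=0$: $\log\Delta(\boldsymbol\omega)=q^{2a+3}-(q^3-1)q^2\frac{q^{2a}-1}{q^2-1}$; (3) if $a=b>0$: $\log\Delta(\boldsymbol\omega)=q^3-(q^a-1)(q^2+q)$.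
   Context: $\mathbb{F}_q$ is a finite field with $q$ elements; $K=\mathbb{F}_q(T)$, $A=\mathbb{F}_q[T]$, $K_\infty=\mathbb{F}_q((1/T))$, $C_\infty$ the completion of an algebraic closure of $K_\infty$, with absolute value normalized by $|T|=q$; $\log x=\log_q|x|$. For a rank-$3$ $A$-lattice $\Lambda\subset C_\infty$ (finitely generated discrete $A$-submodule), $e^\Lambda(z)=z\prod_{0\neq\lambda\in\Lambda}(1-z/\lambda)$, and $\Delta_T(\Lambda)$ is the coefficient of $X^{q^3}$ in the unique polynomial $\phi^\Lambda_T(X)=TX+\ell_1X^q+\ell_2X^{q^2}+\ell_3X^{q^3}$ with $e^\Lambda(Tz)=\phi^\Lambda_T(e^\Lambda(z))$. *)

theory Defs
  imports "HOL-Computational_Algebra.Polynomial"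
begin

text \<open>An abstract model of C_infinity: a field 'k with a non-archimedean absolute value,
complete and algebraically closed, containing a finite subfield Fq with q elements and an
element T with absolute value q.\<close>

definition nonarch_abs :: "('k::field \<Rightarrow> real) \<Rightarrow> bool" where
  "nonarch_abs v \<longleftrightarrow> (\<forall>x. v x \<ge> 0) \<and> (\<forall>x. v x = 0 \<longleftrightarrow> x = 0)
     \<and> (\<forall>x y. v (x * y) = v x * v y) \<and> (\<forall>x y. v (x + y) \<le> max (v x) (v y))"

definition tends_abs :: "('k::field \<Rightarrow> real) \<Rightarrow> (nat \<Rightarrow> 'k) \<Rightarrow> 'k \<Rightarrow> bool" where
  "tends_abs v X L \<longleftrightarrow> (\<forall>e>0. \<exists>N. \<forall>n\<ge>N. v (X n - L) < e)"

definition complete_abs :: "('k::field \<Rightarrow> real) \<Rightarrow> bool" where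
  "complete_abs v \<longleftrightarrow> (\<forall>X::nat \<Rightarrow> 'k.
     (\<forall>e>0. \<exists>N. \<forall>m\<ge>N. \<forall>n\<ge>N. v (X m - X n) < e) \<longrightarrow> (\<exists>L. tends_abs v X L))"

definition alg_closed :: "'k::field itself \<Rightarrow> bool" where
  "alg_closed _ \<longleftrightarrow> (\<forall>p :: 'k poly. degree p > 0 \<longrightarrow> (\<exists>x. poly p x = 0))"

definition is_subfield :: "'k::field set \<Rightarrow> bool" where
  "is_subfield F \<longleftrightarrow> 0 \<in> F \<and> 1 \<in> F \<and> (\<forall>x\<in>F. \<forall>y\<in>F. x + y \<in> F \<and> x * y \<in> F)
     \<and> (\<forall>x\<in>F. - x \<in> F \<and> inverse x \<in> F)"

definition A_ring :: "'k::field set \<Rightarrow> 'k \<Rightarrow> 'k set" where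
  "A_ring Fq T = {poly p T | p. \<forall>i. coeff p i \<in> Fq}"

definition K_field :: "'k::field set \<Rightarrow> 'k \<Rightarrow> 'k set" where
  "K_field Fq T = {x / y | x y. x \<in> A_ring Fq T \<and> y \<in> A_ring Fq T \<and> y \<noteq> 0}"

text \<open>K_infinity = completion of K, realised as the closure of K in 'k\<close>
definition Kinf :: "'k::field set \<Rightarrow> 'k \<Rightarrow> ('k \<Rightarrow> real) \<Rightarrow> 'k set" where
  "Kinf Fq T v = {x. \<forall>e>0. \<exists>y\<in>K_field Fq T. v (x - y) < e}"

definition Cinf_model :: "'k::field set \<Rightarrow> nat \<Rightarrow> 'k \<Rightarrow> ('k \<Rightarrow> real) \<Rightarrow> bool" where
  "Cinf_model Fq q T v \<longleftrightarrow> nonarch_abs v \<and> complete_abs v \<and> alg_closed TYPE('k)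
     \<and> is_subfield Fq \<and> finite Fq \<and> card Fq = q \<and> v T = real q"

definition logq :: "nat \<Rightarrow> ('k \<Rightarrow> real) \<Rightarrow> 'k \<Rightarrow> real" where
  "logq q v x = log (real q) (v x)"

definition lattice3 :: "'k::field set \<Rightarrow> 'k \<Rightarrow> 'k \<Rightarrow> 'k \<Rightarrow> 'k set" where
  "lattice3 Fq T w1 w2 = {a1 * w1 + a2 * w2 + a3 | a1 a2 a3.
     a1 \<in> A_ring Fq T \<and> a2 \<in> A_ring Fq T \<and> a3 \<in> A_ring Fq T}"

text \<open>Exponential e^L(z) = z * prod_{0 \<noteq> l \<in> L} (1 - z/l), the infinite product being the
limit of the partial products over the (finitely many) nonzero lattice points with |l| \<le> n.\<close>
definition expo :: "('k::field \<Rightarrow> real) \<Rightarrow> 'k set \<Rightarrow> 'k \<Rightarrow> 'k" where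
  "expo v L z = z * (THE P. tends_abs v
      (\<lambda>n. \<Prod>l\<in>{l\<in>L. l \<noteq> 0 \<and> v l \<le> real n}. (1 - z / l)) P)"

text \<open>Delta_T(L): the coefficient of X^(q^3) in phi_T^L(X) = T X + l1 X^q + l2 X^(q^2) + l3 X^(q^3)
with e^L(T z) = phi_T^L(e^L(z)).\<close>
definition DeltaT :: "nat \<Rightarrow> 'k::field \<Rightarrow> ('k \<Rightarrow> real) \<Rightarrow> 'k set \<Rightarrow> 'k" where
  "DeltaT q T v L = (THE l3. \<exists>l1 l2. \<forall>z.
      expo v L (T * z) = T * expo v L z + l1 * expo v L z ^ q + l2 * expo v L z ^ (q^2)
                         + l3 * expo v L z ^ (q^3))"

definition orthogonal3 :: "'k::field set \<Rightarrow> 'k \<Rightarrow> ('k \<Rightarrow> real) \<Rightarrow> 'k \<Rightarrow> 'k \<Rightarrow> 'k \<Rightarrow> bool" where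
  "orthogonal3 Fq T v u1 u2 u3 \<longleftrightarrow> (\<forall>x1\<in>Kinf Fq T v. \<forall>x2\<in>Kinf Fq T v. \<forall>x3\<in>Kinf Fq T v.
     v (x1 * u1 + x2 * u2 + x3 * u3) = max (v (x1 * u1)) (max (v (x2 * u2)) (v (x3 * u3))))"

end

theory Submission
  imports Defs
begin

lemma poly_zero_many_roots:
  fixes p :: "'a::field poly"
  assumes "finite S" "degree p < card S" "\<forall>x\<in>S. poly p x = 0"
  shows "p = 0"
proof (rule ccontr)
  assume "p \<noteq> 0"
  hence "card {x. poly p x = 0} \<le> degree p" by (rule card_poly_roots_bound)
  moreover have "card S \<le> card {x. poly p x = 0}"
    using assms \<open>p \<noteq> 0\<close> by (intro card_mono poly_roots_finite) auto
  ultimately show False using assms(2) by linarith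
qed

lemma lin_prod_degree:
  fixes a :: "'b \<Rightarrow> 'a::field"
  assumes "finite W"
  shows "degree (\<Prod>w\<in>W. [:a w, 1:]) = card W" "coeff (\<Prod>w\<in>W. [:a w, 1:]) (card W) = 1"
proof -
  show d: "degree (\<Prod>w\<in>W. [:a w, 1:]) = card W"
    by (subst degree_prod_eq_sum_degree) auto
  have "lead_coeff (\<Prod>w\<in>W. [:a w, 1:]) = 1" by (simp add: lead_coeff_prod)
  thus "coeff (\<Prod>w\<in>W. [:a w, 1:]) (card W) = 1" using d by simp
qed

definition addsub :: "'a::field set \<Rightarrow> bool" where
  "addsub W \<longleftrightarrow> finite W \<and> 0 \<in> W \<and> (\<forall>x\<in>W. \<forall>y\<in>W. x + y \<in> W) \<and> (\<forall>x\<in>W. - x \<in> W)"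

definition MW :: "'a::field set \<Rightarrow> 'a \<Rightarrow> 'a" where
  "MW W x = (\<Prod>w\<in>W. (x - w))"

lemma MW_zero_in: "finite W \<Longrightarrow> x \<in> W \<Longrightarrow> MW W x = 0"
  unfolding MW_def by (rule prod_zero) auto

lemma MW_shift:
  assumes "addsub W" "x \<in> W"
  shows "MW W (x + y) = MW W y"
proof -
  have cl: "w - x \<in> W" "w + x \<in> W" if "w \<in> W" for w
    using assms that unfolding addsub_def by (metis diff_conv_add_uminus)+
  have bij: "bij_betw (\<lambda>w. w - x) W W"
    by (rule bij_betw_byWitness[where f'="\<lambda>w. w + x"]) (use cl in auto)
  have "MW W (x + y) = (\<Prod>w\<in>W. (y - (w - x)))" unfolding MW_def
    by (rule prod.cong) (auto simp: algebra_simps)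
  also have "\<dots> = MW W y" unfolding MW_def
    using prod.reindex_bij_betw[OF bij, of "\<lambda>w. y - w"] by simp
  finally show ?thesis .
qed

lemma MW_add:
  assumes W: "addsub W"
  shows "MW W (x + y) = MW W x + MW W y"
proof -
  have fin: "finite W" and W0: "0 \<in> W" using W by (auto simp: addsub_def)
  define n where "n = card W"
  have n1: "n \<ge> 1" using fin W0 card_gt_0_iff[of W] unfolding n_def by auto
  define p where "p = (\<Prod>w\<in>W. [:y - w, 1:])"
  define r where "r = (\<Prod>w\<in>W. [:- w, 1:])"
  define d where "d = p - r - [:MW W y:]"
  have pp: "poly p x = MW W (x + y)" for x
    unfolding p_def MW_def poly_prod by (intro prod.cong refl) (simp add: algebra_simps)
  have pr: "poly r x = MW W x" for x
    unfolding r_def MW_def poly_prod by (intro prod.cong refl) simp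
  have dp: "degree p = n" "coeff p n = 1" using lin_prod_degree[OF fin] unfolding p_def n_def by auto
  have dr: "degree r = n" "coeff r n = 1" using lin_prod_degree[OF fin] unfolding r_def n_def by auto
  have dless: "degree d < n"
  proof (rule degree_lessI)
    show "d \<noteq> 0 \<or> 0 < n" using n1 by auto
    show "\<forall>k\<ge>n. coeff d k = 0"
    proof (intro allI impI)
      fix k assume "n \<le> k"
      show "coeff d k = 0"
      proof (cases "k = n")
        case True thus ?thesis using dp dr n1 by (simp add: d_def coeff_pCons split: nat.split)
      next
        case False
        hence "k > n" using \<open>n \<le> k\<close> by auto
        hence "coeff p k = 0" "coeff r k = 0" using dp dr by (auto intro: coeff_eq_0)
        thus ?thesis using \<open>k > n\<close> n1 by (simp add: d_def coeff_pCons split: nat.split)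
      qed
    qed
  qed
  have roots: "\<forall>x\<in>W. poly d x = 0"
  proof
    fix x assume x: "x \<in> W"
    have "MW W (x+y) = MW W y" by (rule MW_shift[OF W x])
    moreover have "MW W x = 0" by (rule MW_zero_in[OF fin x])
    ultimately show "poly d x = 0" by (simp add: d_def pp pr)
  qed
  have "d = 0" by (rule poly_zero_many_roots[OF fin]) (use dless roots in \<open>auto simp: n_def\<close>)
  hence "poly d x = 0" by simp
  thus ?thesis by (simp add: d_def pp pr algebra_simps)
qed


lemma poly_eq_by_roots:
  fixes p r :: "'a::field poly"
  assumes "finite S" "n \<le> card S" "n \<ge> 1" "degree p \<le> n" "degree r \<le> n"
    "coeff p n = coeff r n" "\<forall>x\<in>S. poly p x = poly r x"
  shows "p = r"
proof -
  define d where "d = p - r"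
  have "degree d < n"
  proof (rule degree_lessI)
    show "d \<noteq> 0 \<or> 0 < n" using assms by auto
    show "\<forall>k\<ge>n. coeff d k = 0"
    proof (intro allI impI)
      fix k assume k: "n \<le> k"
      show "coeff d k = 0"
      proof (cases "k = n")
        case True thus ?thesis using assms by (simp add: d_def)
      next
        case False
        hence "coeff p k = 0" "coeff r k = 0" using k assms(4,5) by (auto intro: coeff_eq_0)
        thus ?thesis by (simp add: d_def)
      qed
    qed
  qed
  hence "d = 0" using assms by (intro poly_zero_many_roots[OF assms(1)]) (auto simp: d_def)
  thus ?thesis by (simp add: d_def)
qed

definition PW :: "'a::field set \<Rightarrow> 'a \<Rightarrow> 'a" where
  "PW W x = x * (\<Prod>w\<in>W-{0}. (1 - x / w))"

definition kap :: "'a::field set \<Rightarrow> 'a" where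
  "kap W = (\<Prod>w\<in>W-{0}. - w)"

lemma kap_nz: "finite W \<Longrightarrow> kap W \<noteq> 0"
  unfolding kap_def by (auto simp: prod_zero_iff)

lemma MW_PW:
  assumes "finite W" "0 \<in> W"
  shows "MW W x = kap W * PW W x"
proof -
  have "MW W x = (x - 0) * (\<Prod>w\<in>W-{0}. (x - w))"
    unfolding MW_def using assms by (simp add: prod.remove)
  also have "(\<Prod>w\<in>W-{0}. (x - w)) = (\<Prod>w\<in>W-{0}. (- w) * (1 - x / w))"
    by (intro prod.cong refl) (auto simp: field_simps)
  also have "\<dots> = kap W * (\<Prod>w\<in>W-{0}. (1 - x / w))"
    unfolding kap_def by (rule prod.distrib)
  finally show ?thesis unfolding PW_def by simp
qed

lemma PW_add:
  assumes W: "addsub W"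
  shows "PW W (x + y) = PW W x + PW W y"
proof -
  have fin: "finite W" "0 \<in> W" using W by (auto simp: addsub_def)
  have "kap W * PW W (x + y) = kap W * (PW W x + PW W y)"
    using MW_add[OF W, of x y] MW_PW[OF fin] by (simp add: algebra_simps)
  thus ?thesis using kap_nz[OF fin(1)] by simp
qed

lemma PW_0 [simp]: "PW W 0 = 0" by (simp add: PW_def)

lemma PW_neg: "addsub W \<Longrightarrow> PW W (- x) = - PW W x"
  using PW_add[of W x "-x"] by (simp add: add_eq_0_iff)

lemma PW_diff: "addsub W \<Longrightarrow> PW W (x - y) = PW W x - PW W y"
  using PW_add[of W x "-y"] PW_neg[of W y] by simp

lemma PW_zero_iff:
  assumes "finite W" "0 \<in> W"
  shows "PW W x = 0 \<longleftrightarrow> x \<in> W"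
proof
  assume "x \<in> W"
  thus "PW W x = 0" unfolding PW_def using assms
    by (cases "x = 0") (auto simp: prod_zero_iff intro!: bexI[of _ x])
next
  assume "PW W x = 0"
  thus "x \<in> W" unfolding PW_def using assms by (auto simp: prod_zero_iff)
qed

lemma MW_plus:
  assumes W: "addsub W"
  shows "MW W t = (\<Prod>w\<in>W. (t + w))"
proof -
  have bij: "bij_betw uminus W W"
    by (rule bij_betw_byWitness[where f'=uminus]) (use W in \<open>auto simp: addsub_def\<close>)
  have "(\<Prod>w\<in>W. (t + w)) = (\<Prod>w\<in>W. (t - (- w)))" by simp
  also have "\<dots> = MW W t" unfolding MW_def
    using prod.reindex_bij_betw[OF bij, of "\<lambda>w. t - w"] by simp
  finally show ?thesis by simp
qed

lemma PW_transl:
  assumes W: "addsub W" and u: "u \<notin> W"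
  shows "(\<Prod>w\<in>W. (1 - z / (u + w))) = 1 - PW W z / PW W u"
proof -
  have fin: "finite W" "0 \<in> W" using W by (auto simp: addsub_def)
  have nz: "u + w \<noteq> 0" if "w \<in> W" for w
  proof
    assume "u + w = 0"
    hence "u = - w" by (simp add: add_eq_0_iff)
    thus False using u W that by (auto simp: addsub_def)
  qed
  have Pu: "PW W u \<noteq> 0" using PW_zero_iff[OF fin] u by simp
  have "(\<Prod>w\<in>W. (1 - z / (u + w))) = (\<Prod>w\<in>W. ((u - z) + w) / (u + w))"
    by (intro prod.cong refl) (use nz in \<open>auto simp: field_simps\<close>)
  also have "\<dots> = (\<Prod>w\<in>W. ((u - z) + w)) / (\<Prod>w\<in>W. (u + w))"
    by (rule prod_dividef)
  also have "\<dots> = MW W (u - z) / MW W u" using MW_plus[OF W] by simp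
  also have "\<dots> = PW W (u - z) / PW W u" using MW_PW[OF fin] kap_nz[OF fin(1)] by simp
  also have "\<dots> = 1 - PW W z / PW W u" using PW_diff[OF W] Pu by (simp add: field_simps)
  finally show ?thesis .
qed

lemma PW_compose:
  assumes W: "addsub W" and U: "finite U" "0 \<in> U"
    and inj: "inj_on (\<lambda>(u,w). u + w) (U \<times> W)"
    and V: "V = (\<lambda>(u,w). u + w) ` (U \<times> W)"
  shows "PW V z = PW W z * (\<Prod>u\<in>U-{0}. (1 - PW W z / PW W u))"
proof -
  have fin: "finite W" "0 \<in> W" using W by (auto simp: addsub_def)
  define f where "f x = 1 - z / x" for x
  have zero: "u + w = 0 \<longleftrightarrow> u = 0 \<and> w = 0" if "u \<in> U" "w \<in> W" for u w
    using inj_onD[OF inj, of "(u,w)" "(0,0)"] that U fin by auto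
  have notW: "u \<notin> W" if "u \<in> U" "u \<noteq> 0" for u
  proof
    assume "u \<in> W"
    hence "(u, 0) = (0, u)" using inj_onD[OF inj, of "(u,0)" "(0,u)"] that U fin by auto
    thus False using that by simp
  qed
  have Vm: "V - {0} = (\<lambda>(u,w). u + w) ` (U \<times> W - {(0,0)})"
    using zero unfolding V by auto
  have "(\<Prod>x\<in>V-{0}. f x) = (\<Prod>(u,w)\<in>U \<times> W - {(0,0)}. f (u + w))"
    unfolding Vm by (rule prod.reindex_cong[OF inj_on_subset[OF inj]]) auto
  also have "U \<times> W - {(0,0)} = ({0} \<times> (W - {0})) \<union> ((U - {0}) \<times> W)" using U by auto
  also have "(\<Prod>(u,w)\<in>({0} \<times> (W - {0})) \<union> ((U - {0}) \<times> W). f (u + w))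
      = (\<Prod>(u,w)\<in>{0} \<times> (W - {0}). f (u + w)) * (\<Prod>(u,w)\<in>(U - {0}) \<times> W. f (u + w))"
    by (rule prod.union_disjoint) (use U fin in auto)
  also have "(\<Prod>(u,w)\<in>{0} \<times> (W - {0}). f (u + w)) = (\<Prod>w\<in>W-{0}. f w)"
    by (subst prod.cartesian_product[symmetric]) simp
  also have "(\<Prod>(u,w)\<in>(U - {0}) \<times> W. f (u + w)) = (\<Prod>u\<in>U-{0}. \<Prod>w\<in>W. f (u + w))"
    by (subst prod.cartesian_product[symmetric]) simp
  also have "\<dots> = (\<Prod>u\<in>U-{0}. (1 - PW W z / PW W u))"
    by (intro prod.cong refl) (use notW PW_transl[OF W] in \<open>auto simp: f_def\<close>)
  finally have "(\<Prod>x\<in>V-{0}. f x) = (\<Prod>w\<in>W-{0}. f w) * (\<Prod>u\<in>U-{0}. (1 - PW W z / PW W u))" .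
  thus ?thesis unfolding PW_def f_def by (simp add: mult.assoc)
qed

lemma subfield_card_ge2:
  assumes "is_subfield F" "finite F"
  shows "card F \<ge> 2"
proof -
  have "{0, 1} \<subseteq> F" using assms by (auto simp: is_subfield_def)
  hence "card {0::'a,1} \<le> card F" using assms by (intro card_mono) auto
  thus ?thesis by simp
qed

lemma subfield_pow:
  assumes F: "is_subfield F" "finite F" and c: "c \<in> F" "c \<noteq> 0"
  shows "c ^ (card F - 1) = 1"
proof -
  have cl: "x * y \<in> F" "inverse x \<in> F" if "x \<in> F" "y \<in> F" for x y
    using F that by (auto simp: is_subfield_def)
  have bij: "bij_betw (\<lambda>x. c * x) (F - {0}) (F - {0})"
    by (rule bij_betw_byWitness[where f'="\<lambda>x. inverse c * x"]) (use c cl in auto)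
  have "(\<Prod>x\<in>F-{0}. c * x) = (\<Prod>x\<in>F-{0}. x)"
    using prod.reindex_bij_betw[OF bij, of "\<lambda>x. x"] by simp
  moreover have "(\<Prod>x\<in>F-{0}. c * x) = c ^ card (F - {0}) * (\<Prod>x\<in>F-{0}. x)"
    by (simp add: prod.distrib)
  moreover have "(\<Prod>x\<in>F-{0}. x) \<noteq> 0" using F by (auto simp: prod_zero_iff)
  moreover have "card (F - {0}) = card F - 1" using F c by (simp add: is_subfield_def)
  ultimately show ?thesis by simp
qed

lemma subfield_pow_card:
  assumes F: "is_subfield F" "finite F" and c: "c \<in> F"
  shows "c ^ card F = c"
proof (cases "c = 0")
  case True thus ?thesis using subfield_card_ge2[OF F] by (simp add: power_0_left)
next
  case False
  have "card F = Suc (card F - 1)" using subfield_card_ge2[OF F] by simp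
  hence "c ^ card F = c * c ^ (card F - 1)" by (metis power_Suc)
  thus ?thesis using subfield_pow[OF F c False] by simp
qed

lemma subfield_N:
  assumes F: "is_subfield F" "finite F"
  shows "(\<Prod>c\<in>F-{0}. (Z - c)) = Z ^ (card F - 1) - 1"
proof -
  define n where "n = card F - 1"
  have n1: "n \<ge> 1" using subfield_card_ge2[OF F] by (simp add: n_def)
  have cn: "card (F - {0}) = n" using F by (simp add: is_subfield_def n_def)
  define p where "p = (\<Prod>c\<in>F-{0}. [:- c, 1:])"
  define r where "r = (monom 1 n - 1 :: 'a poly)"
  have dp: "degree p = n" "coeff p n = 1" using lin_prod_degree[of "F - {0}" uminus] F cn
    by (auto simp: p_def)
  have dr: "degree r \<le> n" "coeff r n = 1" using n1 unfolding r_def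
    by (auto intro!: degree_diff_le simp: degree_monom_le)
  have "p = r"
  proof (rule poly_eq_by_roots[of "F - {0}" n])
    show "\<forall>x\<in>F - {0}. poly p x = poly r x"
      using subfield_pow[OF F] by (auto simp: p_def r_def poly_prod poly_monom n_def prod_zero_iff F)
  qed (use F cn n1 dp dr in auto)
  hence "poly p Z = poly r Z" by simp
  thus ?thesis by (simp add: p_def r_def poly_prod poly_monom n_def)
qed

lemma subfield_prod_one_minus:
  assumes F: "is_subfield F" "finite F"
  shows "(\<Prod>c\<in>F-{0}. (1 - Z / c)) = 1 - Z ^ (card F - 1)"
proof -
  have "(\<Prod>c\<in>F-{0}. (1 - Z / c)) = (\<Prod>c\<in>F-{0}. (Z - c) / (0 - c))"
    by (intro prod.cong refl) (auto simp: field_simps)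
  also have "\<dots> = (\<Prod>c\<in>F-{0}. (Z - c)) / (\<Prod>c\<in>F-{0}. (0 - c))"
    by (rule prod_dividef)
  also have "\<dots> = (Z ^ (card F - 1) - 1) / (0 ^ (card F - 1) - 1)"
    by (simp only: subfield_N[OF F])
  also have "0 ^ (card F - 1) = (0::'a)" using subfield_card_ge2[OF F] by simp
  finally show ?thesis by (simp add: field_simps)
qed

lemma subfield_addsub: "is_subfield F \<Longrightarrow> finite F \<Longrightarrow> addsub F"
  by (auto simp: is_subfield_def addsub_def)

lemma frobenius_add:
  fixes F :: "'a::field set" and x y :: 'a
  assumes F: "is_subfield F" "finite F"
  shows "(x + y) ^ card F = x ^ card F + y ^ card F"
proof -
  have M: "MW F Z = Z ^ card F - Z" for Z
  proof -
    have "MW F Z = (Z - 0) * (\<Prod>c\<in>F-{0}. (Z - c))"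
      unfolding MW_def using F prod.remove[OF F(2), of 0 "\<lambda>c. Z - c"] by (simp add: is_subfield_def)
    also have "\<dots> = Z * (Z ^ (card F - 1) - 1)" using subfield_N[OF F] by simp
    also have "\<dots> = Z ^ card F - Z"
      using subfield_card_ge2[OF F] by (simp add: algebra_simps power_eq_if)
    finally show ?thesis .
  qed
  show ?thesis using MW_add[OF subfield_addsub[OF F], of x y] by (simp add: M)
qed

definition fstable :: "'a::field set \<Rightarrow> 'a set \<Rightarrow> bool" where
  "fstable F W \<longleftrightarrow> (\<forall>c\<in>F. \<forall>w\<in>W. c * w \<in> W)"

lemma PW_homog:
  assumes F: "is_subfield F" and W: "fstable F W" and c: "c \<in> F"
  shows "PW W (c * x) = c * PW W x"
proof (cases "c = 0")
  case True thus ?thesis by simp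
next
  case False
  have ic: "inverse c \<in> F" using F c by (auto simp: is_subfield_def)
  have bij: "bij_betw (\<lambda>w. c * w) (W - {0}) (W - {0})"
    by (rule bij_betw_byWitness[where f'="\<lambda>w. inverse c * w"])
       (use W c ic False in \<open>auto simp: fstable_def\<close>)
  have "(\<Prod>w\<in>W-{0}. (1 - c * x / (c * w))) = (\<Prod>w\<in>W-{0}. (1 - c * x / w))"
    using prod.reindex_bij_betw[OF bij, of "\<lambda>w. 1 - c * x / w"] by simp
  moreover have "(\<Prod>w\<in>W-{0}. (1 - c * x / (c * w))) = (\<Prod>w\<in>W-{0}. (1 - x / w))"
    using False by simp
  ultimately show ?thesis unfolding PW_def by simp
qed

definition sstep :: "'a::field set \<Rightarrow> 'a set \<Rightarrow> 'a \<Rightarrow> 'a set" where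
  "sstep F W y = (\<lambda>(u,w). u + w) ` ((\<lambda>c. c * y) ` F \<times> W)"

lemma sstep_mem: "sstep F W y = {c * y + w | c w. c \<in> F \<and> w \<in> W}"
  unfolding sstep_def by auto

locale subf =
  fixes F :: "'a::field set"
  assumes sf: "is_subfield F" and finF: "finite F"
begin

lemma F0: "0 \<in> F" and F1: "1 \<in> F" using sf by (auto simp: is_subfield_def)
lemma Fadd: "x \<in> F \<Longrightarrow> y \<in> F \<Longrightarrow> x + y \<in> F" and Fmult: "x \<in> F \<Longrightarrow> y \<in> F \<Longrightarrow> x * y \<in> F"
  and Fneg: "x \<in> F \<Longrightarrow> - x \<in> F" and Finv: "x \<in> F \<Longrightarrow> inverse x \<in> F"
  using sf by (auto simp: is_subfield_def)
lemma Fdiff: "x \<in> F \<Longrightarrow> y \<in> F \<Longrightarrow> x - y \<in> F"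
  using Fadd Fneg by (metis diff_conv_add_uminus)

lemma card_ge2: "card F \<ge> 2" using subfield_card_ge2[OF sf finF] .

lemma sstep_props:
  assumes W: "addsub W" "fstable F W" and y: "y \<notin> W"
  shows "inj_on (\<lambda>(u,w). u + w) ((\<lambda>c. c * y) ` F \<times> W)"
    and "inj_on (\<lambda>c. c * y) F"
    and "addsub (sstep F W y)" and "fstable F (sstep F W y)"
    and "card (sstep F W y) = card F * card W"
    and "W \<subseteq> sstep F W y" and "y \<in> sstep F W y"
    and "PW (sstep F W y) X = PW W X - PW W X ^ card F / PW W y ^ (card F - 1)"
proof -
  have Wf: "finite W" "0 \<in> W" and Wa: "\<And>x z. x \<in> W \<Longrightarrow> z \<in> W \<Longrightarrow> x + z \<in> W"
    and Wn: "\<And>x. x \<in> W \<Longrightarrow> - x \<in> W" using W by (auto simp: addsub_def)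
  have Wd: "x - z \<in> W" if "x \<in> W" "z \<in> W" for x z using Wa Wn that by (metis diff_conv_add_uminus)
  have Ws: "\<And>c x. c \<in> F \<Longrightarrow> x \<in> W \<Longrightarrow> c * x \<in> W" using W by (auto simp: fstable_def)
  have y0: "y \<noteq> 0" using y Wf by auto
  show injc: "inj_on (\<lambda>c. c * y) F" using y0 by (auto simp: inj_on_def)
  have key: "c = c' \<and> w = w'" if "c \<in> F" "c' \<in> F" "w \<in> W" "w' \<in> W" "c * y + w = c' * y + w'" for c c' w w'
  proof (cases "c = c'")
    case True thus ?thesis using that by simp
  next
    case False
    have "(c - c') * y = w' - w" using that(5) by (simp add: algebra_simps)
    hence "y = inverse (c - c') * (w' - w)" using False by (simp add: field_simps)
    moreover have "inverse (c - c') * (w' - w) \<in> W"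
      using Ws Finv Fdiff Wd that by simp
    ultimately show ?thesis using y by simp
  qed
  show inj: "inj_on (\<lambda>(u,w). u + w) ((\<lambda>c. c * y) ` F \<times> W)"
    by (auto simp: inj_on_def dest: key)
  show "card (sstep F W y) = card F * card W"
    unfolding sstep_def using card_image[OF inj] card_image[OF injc] by (simp add: card_cartesian_product)
  show "addsub (sstep F W y)"
    unfolding addsub_def sstep_mem
  proof (intro conjI ballI)
    show "finite {c * y + w |c w. c \<in> F \<and> w \<in> W}"
      using finF Wf by (simp add: sstep_mem[symmetric] sstep_def)
    show "0 \<in> {c * y + w |c w. c \<in> F \<and> w \<in> W}"
      using F0 Wf by (auto intro!: exI[of _ 0])
    fix x z assume "x \<in> {c * y + w |c w. c \<in> F \<and> w \<in> W}" "z \<in> {c * y + w |c w. c \<in> F \<and> w \<in> W}"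
    then obtain c w c' w' where "x = c * y + w" "z = c' * y + w'" "c \<in> F" "w \<in> W" "c' \<in> F" "w' \<in> W" by auto
    moreover have "x + z = (c + c') * y + (w + w')" using \<open>x = c * y + w\<close> \<open>z = c' * y + w'\<close>
      by (simp add: algebra_simps)
    ultimately show "x + z \<in> {c * y + w |c w. c \<in> F \<and> w \<in> W}"
      using Fadd Wa by blast
  next
    fix x assume "x \<in> {c * y + w |c w. c \<in> F \<and> w \<in> W}"
    then obtain c w where "x = c * y + w" "c \<in> F" "w \<in> W" by auto
    moreover have "- x = (- c) * y + (- w)" using \<open>x = c * y + w\<close> by (simp add: algebra_simps)
    ultimately show "- x \<in> {c * y + w |c w. c \<in> F \<and> w \<in> W}"
      using Fneg Wn by blast
  qed
  show "fstable F (sstep F W y)"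
    unfolding fstable_def sstep_mem
  proof (intro ballI)
    fix d x assume "d \<in> F" "x \<in> {c * y + w |c w. c \<in> F \<and> w \<in> W}"
    then obtain c w where "x = c * y + w" "c \<in> F" "w \<in> W" by auto
    moreover have "d * x = (d * c) * y + d * w" using \<open>x = c * y + w\<close> by (simp add: algebra_simps)
    ultimately show "d * x \<in> {c * y + w |c w. c \<in> F \<and> w \<in> W}"
      using Fmult Ws \<open>d \<in> F\<close> by blast
  qed
  show "W \<subseteq> sstep F W y" unfolding sstep_mem using F0 by force
  show "y \<in> sstep F W y" unfolding sstep_mem using F1 Wf by force
  define U where "U = (\<lambda>c. c * y) ` F"
  have comp: "PW (sstep F W y) X = PW W X * (\<Prod>u\<in>U-{0}. (1 - PW W X / PW W u))"
    by (rule PW_compose[OF W(1)]) (use finF F0 inj in \<open>auto simp: U_def sstep_def\<close>)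
  have U0: "U - {0} = (\<lambda>c. c * y) ` (F - {0})" using y0 by (auto simp: U_def)
  have "(\<Prod>u\<in>U-{0}. (1 - PW W X / PW W u)) = (\<Prod>c\<in>F-{0}. (1 - PW W X / PW W (c * y)))"
    unfolding U0 by (rule prod.reindex_cong[OF inj_on_subset[OF injc]]) auto
  also have "\<dots> = (\<Prod>c\<in>F-{0}. (1 - (PW W X / PW W y) / c))"
    by (intro prod.cong refl) (simp add: PW_homog[OF sf W(2)])
  also have "\<dots> = 1 - (PW W X / PW W y) ^ (card F - 1)"
    by (rule subfield_prod_one_minus[OF sf finF])
  finally have "PW (sstep F W y) X = PW W X * (1 - (PW W X / PW W y) ^ (card F - 1))"
    using comp by simp
  also have "\<dots> = PW W X - PW W X * PW W X ^ (card F - 1) / PW W y ^ (card F - 1)"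
    by (simp add: algebra_simps power_divide)
  also have "PW W X * PW W X ^ (card F - 1) = PW W X ^ card F"
    using card_ge2 by (metis Suc_diff_1 less_le_trans pos2 power_Suc)
  finally show "PW (sstep F W y) X = PW W X - PW W X ^ card F / PW W y ^ (card F - 1)" .
qed

lemma frob_sum:
  fixes f :: "'b \<Rightarrow> 'a"
  assumes "finite I"
  shows "(\<Sum>i\<in>I. f i) ^ card F = (\<Sum>i\<in>I. f i ^ card F)"
  using assms
proof (induction I rule: finite_induct)
  case empty thus ?case using card_ge2 by (cases "card F") auto
next
  case (insert x I) thus ?case by (simp add: frobenius_add[OF sf finF])
qed

lemma qpoly_step:
  fixes f :: "'a \<Rightarrow> 'a" and a :: "nat \<Rightarrow> 'a"
  assumes f: "\<forall>X. f X = (\<Sum>i\<le>k. a i * X ^ (card F ^ i))"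
  shows "\<exists>b. (\<forall>X. f X - f X ^ card F / s = (\<Sum>i\<le>Suc k. b i * X ^ (card F ^ i))) \<and> b 0 = a 0"
proof -
  let ?q = "card F"
  define b where "b i = (if i \<le> k then a i else 0) - (if i = 0 then 0 else a (i - 1) ^ ?q / s)" for i
  have "f X - f X ^ ?q / s = (\<Sum>i\<le>Suc k. b i * X ^ (?q ^ i))" for X
  proof -
    have "f X ^ ?q = (\<Sum>i\<le>k. a i * X ^ (?q ^ i)) ^ ?q" using f by simp
    also have "\<dots> = (\<Sum>i\<le>k. (a i * X ^ (?q ^ i)) ^ ?q)"
      using frob_sum[where I="{..k}" and f="\<lambda>i. a i * X ^ (card F ^ i)"] by simp
    also have "\<dots> = (\<Sum>i\<le>k. a i ^ ?q * X ^ (?q ^ Suc i))"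
      by (intro sum.cong refl) (simp add: power_mult_distrib, metis power_mult mult.commute)
    finally have fq: "f X ^ ?q / s = (\<Sum>i\<le>k. a i ^ ?q / s * X ^ (?q ^ Suc i))"
      by (simp add: sum_divide_distrib)
    have "(\<Sum>i\<le>Suc k. b i * X ^ (?q ^ i)) =
        (\<Sum>i\<le>Suc k. (if i \<le> k then a i else 0) * X ^ (?q ^ i)) -
        (\<Sum>i\<le>Suc k. (if i = 0 then 0 else a (i - 1) ^ ?q / s) * X ^ (?q ^ i))"
      unfolding b_def by (simp add: sum_subtractf algebra_simps)
    also have "(\<Sum>i\<le>Suc k. (if i \<le> k then a i else 0) * X ^ (?q ^ i)) = (\<Sum>i\<le>k. a i * X ^ (?q ^ i))"
      by (simp add: sum.atMost_Suc)
    also have "(\<Sum>i\<le>Suc k. (if i = 0 then 0 else a (i - 1) ^ ?q / s) * X ^ (?q ^ i)) =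
        (\<Sum>i\<le>k. a i ^ ?q / s * X ^ (?q ^ Suc i))"
      by (subst sum.atMost_Suc_shift) simp
    finally show ?thesis using f fq by simp
  qed
  moreover have "b 0 = a 0" by (simp add: b_def)
  ultimately show ?thesis by blast
qed

lemma qcoeff:
  fixes Y :: "'a set" and a :: "nat \<Rightarrow> 'a"
  assumes inf: "infinite (UNIV :: 'a set)"
    and Y: "finite Y" "0 \<in> Y" "card Y = card F ^ n"
    and f: "\<forall>X. PW Y X = (\<Sum>i\<le>n. a i * X ^ (card F ^ i))"
  shows "a n = (\<Prod>y\<in>Y-{0}. - 1 / y)"
proof -
  let ?q = "card F"
  define Q where "Q = (\<Prod>y\<in>Y-{0}. [:1, - 1 / y:])"
  define p where "p = [:0, 1:] * Q"
  define r where "r = (\<Sum>i\<le>n. monom (a i) (?q ^ i))"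
  have Qnz: "Q \<noteq> 0" unfolding Q_def using Y by (auto simp: prod_zero_iff)
  have dQ: "degree Q = card Y - 1" unfolding Q_def using Y
    by (subst degree_prod_eq_sum_degree) auto
  have qn: "?q ^ n \<ge> 1" using card_ge2 by simp
  have dp: "degree p = ?q ^ n" unfolding p_def using Qnz dQ Y qn
    by (subst degree_mult_eq) auto
  have "lead_coeff Q = (\<Prod>y\<in>Y-{0}. - 1 / y)"
    unfolding Q_def lead_coeff_prod by (intro prod.cong refl) auto
  hence lp: "lead_coeff p = (\<Prod>y\<in>Y-{0}. - 1 / y)"
    unfolding p_def using Qnz by (simp add: lead_coeff_mult)
  have pp: "poly p X = PW Y X" for X
    unfolding p_def Q_def PW_def by (simp add: poly_prod)
  have pr: "poly r X = (\<Sum>i\<le>n. a i * X ^ (?q ^ i))" for X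
    unfolding r_def by (simp add: poly_sum poly_monom)
  have "p = r"
  proof (rule ccontr)
    assume "p \<noteq> r"
    hence "finite {x. poly (p - r) x = 0}" by (intro poly_roots_finite) simp
    moreover have "{x. poly (p - r) x = 0} = (UNIV :: 'a set)" using pp pr f by simp
    ultimately have "finite (UNIV :: 'a set)" by simp
    thus False using inf by contradiction
  qed
  have inj: "?q ^ i = ?q ^ n \<longleftrightarrow> i = n" for i
    using card_ge2 by (simp add: power_inject_exp)
  have "coeff r (?q ^ n) = a n"
    unfolding r_def coeff_sum coeff_monom using inj by (simp add: sum.delta)
  moreover have "coeff p (?q ^ n) = lead_coeff p" using dp by simp
  ultimately show ?thesis using lp \<open>p = r\<close> by simp
qed

end

lemma real_pow_eq_1:
  fixes x :: real
  assumes "x \<ge> 0" "x ^ n = 1" "n \<ge> 1"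
  shows "x = 1"
proof (rule ccontr)
  assume "x \<noteq> 1"
  hence "x < 1 \<or> x > 1" by auto
  thus False
  proof
    assume "x < 1" hence "x ^ n < 1" using assms power_less_one_iff[of x n] by auto
    thus False using assms by simp
  next
    assume "x > 1" hence "x ^ n > 1" using assms by (intro one_less_power) auto
    thus False using assms by simp
  qed
qed

locale cm =
  fixes Fq :: "'k::field set" and q :: nat and T :: 'k and v :: "'k \<Rightarrow> real"
  assumes model: "Cinf_model Fq q T v"
begin

lemma na: "nonarch_abs v" and compl: "complete_abs v" and sf: "is_subfield Fq"
  and finF: "finite Fq" and cardF: "card Fq = q" and vT: "v T = real q"
  using model by (auto simp: Cinf_model_def)

sublocale subf Fq by unfold_locales (rule sf, rule finF)

lemma q2: "q \<ge> 2" using card_ge2 cardF by simp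
lemma q1: "real q > 1" using q2 by simp

lemma v_nonneg [simp]: "v x \<ge> 0" and v_eq_0 [simp]: "v x = 0 \<longleftrightarrow> x = 0"
  and v_mult: "v (x * y) = v x * v y" and v_add: "v (x + y) \<le> max (v x) (v y)"
  using na by (auto simp: nonarch_abs_def)

lemma v_pos: "x \<noteq> 0 \<Longrightarrow> v x > 0" using v_nonneg[of x] v_eq_0[of x] by linarith

lemma v_1 [simp]: "v 1 = 1"
proof -
  have "v 1 = v 1 * v 1" using v_mult[of 1 1] by simp
  moreover have "v 1 \<noteq> 0" by simp
  ultimately show ?thesis by simp
qed

lemma v_0 [simp]: "v 0 = 0" by simp

lemma v_neg1: "v (-1) = 1"
proof -
  have "v (-1) * v (-1) = 1" using v_mult[of "-1" "-1"] by simp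
  hence "v (-1) ^ 2 = 1" by (simp add: power2_eq_square)
  thus ?thesis using real_pow_eq_1[of "v (-1)" 2] by simp
qed

lemma v_uminus [simp]: "v (- x) = v x"
  using v_mult[of "-1" x] v_neg1 by simp

lemma v_minus_commute: "v (x - y) = v (y - x)"
  using v_uminus[of "x - y"] by simp

lemma v_inverse: "v (inverse x) = inverse (v x)"
proof (cases "x = 0")
  case False
  hence "v x * v (inverse x) = 1" using v_mult[of x "inverse x"] by simp
  thus ?thesis by (metis inverse_unique)
qed simp

lemma v_divide: "v (x / y) = v x / v y"
  by (simp add: divide_inverse v_mult v_inverse)

lemma v_power: "v (x ^ n) = v x ^ n"
  by (induction n) (simp_all add: v_mult)

lemma v_prod: "v (\<Prod>i\<in>I. f i) = (\<Prod>i\<in>I. v (f i))"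
  by (induction I rule: infinite_finite_induct) (simp_all add: v_mult)

lemma v_diff: "v (x - y) \<le> max (v x) (v y)"
  using v_add[of x "- y"] by simp

lemma v_strict: assumes "v x < v y" shows "v (x + y) = v y"
proof -
  have "v y = v ((x + y) + (- x))" by simp
  also have "\<dots> \<le> max (v (x + y)) (v x)" using v_add[of "x + y" "- x"] by simp
  finally have "v y \<le> max (v (x + y)) (v x)" .
  hence "v y \<le> v (x + y)" using assms by auto
  moreover have "v (x + y) \<le> v y" using v_add[of x y] assms by simp
  ultimately show ?thesis by simp
qed

lemma v_strict': "v x < v y \<Longrightarrow> v (y + x) = v y"
  using v_strict by (simp add: add.commute)

lemma v_strict_diff: "v x < v y \<Longrightarrow> v (y - x) = v y"
  using v_strict'[of "- x" y] by simp

lemma v_cont: "\<bar>v x - v y\<bar> \<le> v (x - y)"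
proof -
  have h1: "v x \<le> max (v (x - y)) (v y)" using v_add[of "x - y" y] by simp
  have h2: "v y \<le> max (v (x - y)) (v x)" using v_add[of "y - x" x] v_minus_commute[of x y] by simp
  have "v x - v y \<le> v (x - y)" using h1 v_nonneg[of "x - y"] v_nonneg[of y] unfolding le_max_iff_disj by (smt (verit))
  moreover have "v y - v x \<le> v (x - y)" using h2 v_nonneg[of "x - y"] v_nonneg[of x] unfolding le_max_iff_disj by (smt (verit))
  ultimately show ?thesis by (simp add: abs_le_iff)
qed

lemma v_sum_le: "(\<And>i. i \<in> I \<Longrightarrow> v (f i) \<le> M) \<Longrightarrow> M \<ge> 0 \<Longrightarrow> v (\<Sum>i\<in>I. f i) \<le> M"
proof (induction I rule: infinite_finite_induct)
  case (insert x F)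
  have "v (f x + sum f F) \<le> max (v (f x)) (v (sum f F))" by (rule v_add)
  also have "\<dots> \<le> M" using insert by auto
  finally show ?case using insert by simp
qed auto

lemma v_Fq: assumes "c \<in> Fq" "c \<noteq> 0" shows "v c = 1"
proof -
  have "c ^ (card Fq - 1) = 1" by (rule subfield_pow[OF sf finF assms])
  hence "v c ^ (q - 1) = 1" using cardF v_power[of c "q - 1"] by simp
  thus ?thesis using real_pow_eq_1[of "v c" "q - 1"] q2 by simp
qed

lemma v_Fq_le: "c \<in> Fq \<Longrightarrow> v c \<le> 1"
  using v_Fq by (cases "c = 0") auto

lemma T_nz: "T \<noteq> 0" using vT q2 v_eq_0[of T] by auto

lemma infinite_k: "infinite (UNIV :: 'k set)"
proof -
  have "inj (\<lambda>n::nat. T ^ n)"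
  proof (rule injI)
    fix m n :: nat assume "T ^ m = T ^ n"
    hence "real q ^ m = real q ^ n" using v_power[of T] vT by metis
    thus "m = n" using q1 by (simp add: power_inject_exp)
  qed
  thus ?thesis using infinite_UNIV_nat by (metis finite_imageD finite_subset subset_UNIV)
qed

definition conv :: "(real \<Rightarrow> 'k) \<Rightarrow> 'k \<Rightarrow> bool" where
  "conv f L \<longleftrightarrow> (\<forall>e>0. \<exists>R. \<forall>r\<ge>R. v (f r - L) < e)"

lemma conv_unique: assumes "conv f L" "conv f M" shows "L = M"
proof (rule ccontr)
  assume "L \<noteq> M"
  hence e: "v (L - M) > 0" using v_pos by simp
  obtain R1 where R1: "\<forall>r\<ge>R1. v (f r - L) < v (L - M)" using assms(1) e unfolding conv_def by blast
  obtain R2 where R2: "\<forall>r\<ge>R2. v (f r - M) < v (L - M)" using assms(2) e unfolding conv_def by blast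
  define r where "r = max R1 R2"
  have "v (L - M) = v ((f r - M) - (f r - L))" by simp
  also have "\<dots> \<le> max (v (f r - M)) (v (f r - L))" by (rule v_diff)
  also have "\<dots> < v (L - M)" using R1 R2 by (simp add: r_def)
  finally show False by simp
qed

lemma conv_const: "conv (\<lambda>r. c) c" unfolding conv_def by auto

lemma conv_eventually: assumes "conv f L" "\<And>r. r \<ge> R \<Longrightarrow> g r = f r" shows "conv g L"
  unfolding conv_def
proof (intro allI impI)
  fix e :: real assume "e > 0"
  then obtain R1 where "\<forall>r\<ge>R1. v (f r - L) < e" using assms unfolding conv_def by blast
  thus "\<exists>R. \<forall>r\<ge>R. v (g r - L) < e" using assms(2) by (intro exI[of _ "max R R1"]) auto
qed

lemma conv_add: assumes "conv f L" "conv g M" shows "conv (\<lambda>r. f r + g r) (L + M)"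
  unfolding conv_def
proof (intro allI impI)
  fix e :: real assume e: "e > 0"
  obtain R1 where R1: "\<forall>r\<ge>R1. v (f r - L) < e" using assms(1) e unfolding conv_def by blast
  obtain R2 where R2: "\<forall>r\<ge>R2. v (g r - M) < e" using assms(2) e unfolding conv_def by blast
  show "\<exists>R. \<forall>r\<ge>R. v (f r + g r - (L + M)) < e"
  proof (intro exI[of _ "max R1 R2"] allI impI)
    fix r assume "max R1 R2 \<le> r"
    have "v (f r + g r - (L + M)) = v ((f r - L) + (g r - M))" by (simp add: algebra_simps)
    also have "\<dots> \<le> max (v (f r - L)) (v (g r - M))" by (rule v_add)
    also have "\<dots> < e" using R1 R2 \<open>max R1 R2 \<le> r\<close> by auto
    finally show "v (f r + g r - (L + M)) < e" .
  qed
qed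

lemma conv_bounded: assumes "conv f L" shows "\<exists>R. \<forall>r\<ge>R. v (f r) \<le> v L + 1"
proof -
  obtain R where R: "\<forall>r\<ge>R. v (f r - L) < 1" using assms unfolding conv_def by (meson zero_less_one)
  have "v (f r) \<le> v L + 1" if "r \<ge> R" for r
  proof -
    have "v (f r) = v ((f r - L) + L)" by simp
    also have "\<dots> \<le> max (v (f r - L)) (v L)" by (rule v_add)
    also have "\<dots> \<le> v L + 1"
    proof -
      have "v (f r - L) < 1" using R that by simp
      thus ?thesis using v_nonneg[of L] by (smt (verit) max_def)
    qed
    finally show ?thesis .
  qed
  thus ?thesis by blast
qed

lemma conv_mult: assumes "conv f L" "conv g M" shows "conv (\<lambda>r. f r * g r) (L * M)"
  unfolding conv_def
proof (intro allI impI)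
  fix e :: real assume e: "e > 0"
  obtain R0 where R0: "\<forall>r\<ge>R0. v (f r) \<le> v L + 1" using conv_bounded[OF assms(1)] by blast
  define e1 where "e1 = e / (v L + 1)"
  define e2 where "e2 = e / (v M + 1)"
  have e1: "e1 > 0" and e2: "e2 > 0" using e v_nonneg[of L] v_nonneg[of M] by (auto simp: e1_def e2_def add_nonneg_pos)
  obtain R1 where R1: "\<forall>r\<ge>R1. v (f r - L) < e2" using assms(1) e2 unfolding conv_def by blast
  obtain R2 where R2: "\<forall>r\<ge>R2. v (g r - M) < e1" using assms(2) e1 unfolding conv_def by blast
  show "\<exists>R. \<forall>r\<ge>R. v (f r * g r - L * M) < e"
  proof (intro exI[of _ "max R0 (max R1 R2)"] allI impI)
    fix r assume r: "max R0 (max R1 R2) \<le> r"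
    have a: "v (f r * (g r - M)) < e"
    proof -
      have "v (f r * (g r - M)) = v (f r) * v (g r - M)" by (rule v_mult)
      also have "\<dots> \<le> (v L + 1) * v (g r - M)" using R0 r by (intro mult_right_mono) auto
      also have "\<dots> < (v L + 1) * e1" using R2 r by (intro mult_strict_left_mono) (auto simp: add_nonneg_pos)
      also have "\<dots> = e" unfolding e1_def using v_nonneg[of L]
        by (metis add_nonneg_pos less_numeral_extra(1) nonzero_mult_div_cancel_left order_less_irrefl times_divide_eq_right)
      finally show ?thesis .
    qed
    have b: "v ((f r - L) * M) < e"
    proof -
      have "v ((f r - L) * M) = v (f r - L) * v M" by (rule v_mult)
      also have "\<dots> \<le> e2 * v M" using R1 r by (intro mult_right_mono) auto
      also have "\<dots> < e2 * (v M + 1)" using e2 by simp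
      also have "\<dots> = e" unfolding e2_def using v_nonneg[of M]
        by (metis add_nonneg_pos less_numeral_extra(1) nonzero_mult_div_cancel_right order_less_irrefl times_divide_eq_left)
      finally show ?thesis .
    qed
    have "v (f r * g r - L * M) = v (f r * (g r - M) + (f r - L) * M)" by (simp add: algebra_simps)
    also have "\<dots> \<le> max (v (f r * (g r - M))) (v ((f r - L) * M))" by (rule v_add)
    also have "\<dots> < e" using a b by simp
    finally show "v (f r * g r - L * M) < e" .
  qed
qed

lemma conv_prod: "finite I \<Longrightarrow> (\<And>i. i \<in> I \<Longrightarrow> conv (f i) (L i)) \<Longrightarrow> conv (\<lambda>r. \<Prod>i\<in>I. f i r) (\<Prod>i\<in>I. L i)"
proof (induction I rule: finite_induct)
  case empty thus ?case by (simp add: conv_const)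
next
  case (insert x I)
  thus ?case using conv_mult[of "f x" "L x" "\<lambda>r. \<Prod>i\<in>I. f i r"] by simp
qed

lemma conv_v_eventually: assumes "conv f L" "\<And>r. r \<ge> R \<Longrightarrow> v (f r) = c" shows "v L = c"
proof (rule ccontr)
  assume ne: "v L \<noteq> c"
  hence e: "\<bar>v L - c\<bar> > 0" by simp
  obtain R1 where R1: "\<forall>r\<ge>R1. v (f r - L) < \<bar>v L - c\<bar>" using assms(1) e unfolding conv_def by blast
  define r where "r = max R R1"
  have "\<bar>v (f r) - v L\<bar> \<le> v (f r - L)" by (rule v_cont)
  also have "\<dots> < \<bar>v L - c\<bar>" using R1 by (simp add: r_def)
  finally show False using assms(2)[of r] by (simp add: r_def)
qed

lemma conv_inverse: assumes "conv f L" "L \<noteq> 0" shows "conv (\<lambda>r. inverse (f r)) (inverse L)"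
  unfolding conv_def
proof (intro allI impI)
  fix e :: real assume e: "e > 0"
  have vL: "v L > 0" using assms v_pos by simp
  define e' where "e' = min (v L) (e * v L * v L)"
  have e': "e' > 0" using e vL by (simp add: e'_def)
  obtain R where R: "\<forall>r\<ge>R. v (f r - L) < e'" using assms(1) e' unfolding conv_def by blast
  show "\<exists>R. \<forall>r\<ge>R. v (inverse (f r) - inverse L) < e"
  proof (intro exI[of _ R] allI impI)
    fix r assume r: "R \<le> r"
    have d: "v (f r - L) < v L" "v (f r - L) < e * v L * v L" using R r by (auto simp: e'_def)
    have vf: "v (f r) = v L" using v_strict[OF d(1)] by simp
    hence fnz: "f r \<noteq> 0" using vL by auto
    have "inverse (f r) - inverse L = (L - f r) / (f r * L)" using fnz assms(2) by (simp add: field_simps)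
    hence "v (inverse (f r) - inverse L) = v (f r - L) / (v L * v L)"
      by (simp add: v_divide v_mult vf v_minus_commute)
    also have "\<dots> < e" using d(2) vL by (simp add: divide_less_eq)
    finally show "v (inverse (f r) - inverse L) < e" .
  qed
qed

lemma conv_neg: "conv g M \<Longrightarrow> conv (\<lambda>r. - g r) (- M)"
proof -
  assume "conv g M"
  moreover have "v (- g r - - M) = v (g r - M)" for r using v_uminus[of "g r - M"] by simp
  ultimately show ?thesis unfolding conv_def by simp
qed

lemma conv_diff: "conv f L \<Longrightarrow> conv g M \<Longrightarrow> conv (\<lambda>r. f r - g r) (L - M)"
  using conv_add[OF _ conv_neg, of f L g M] by simp

lemma conv_div: "conv f L \<Longrightarrow> conv g M \<Longrightarrow> M \<noteq> 0 \<Longrightarrow> conv (\<lambda>r. f r / g r) (L / M)"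
  using conv_mult[OF _ conv_inverse] by (simp add: divide_inverse)

lemma conv_scale: assumes "conv f L" "c > 0" shows "conv (\<lambda>r. f (r / c)) L"
  unfolding conv_def
proof (intro allI impI)
  fix e :: real assume "e > 0"
  then obtain R where R: "\<forall>r\<ge>R. v (f r - L) < e" using assms unfolding conv_def by blast
  show "\<exists>R. \<forall>r\<ge>R. v (f (r / c) - L) < e"
    using R assms(2) by (intro exI[of _ "R * c"]) (auto simp: field_simps)
qed

lemma tends_unique: assumes "tends_abs v X L" "tends_abs v X M" shows "L = M"
proof (rule ccontr)
  assume "L \<noteq> M"
  hence e: "v (L - M) > 0" using v_pos by simp
  obtain N1 where N1: "\<forall>n\<ge>N1. v (X n - L) < v (L - M)" using assms(1) e unfolding tends_abs_def by blast
  obtain N2 where N2: "\<forall>n\<ge>N2. v (X n - M) < v (L - M)" using assms(2) e unfolding tends_abs_def by blast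
  define n where "n = max N1 N2"
  have "v (L - M) = v ((X n - M) - (X n - L))" by simp
  also have "\<dots> \<le> max (v (X n - M)) (v (X n - L))" by (rule v_diff)
  also have "\<dots> < v (L - M)" using N1 N2 by (simp add: n_def)
  finally show False by simp
qed

end

context cm
begin

abbreviation "A \<equiv> A_ring Fq T"

definition fqp :: "'k poly \<Rightarrow> bool" where "fqp p \<longleftrightarrow> (\<forall>i. coeff p i \<in> Fq)"

lemma fqp_pCons: "fqp (pCons c p) \<longleftrightarrow> c \<in> Fq \<and> fqp p"
  unfolding fqp_def by (auto simp: coeff_pCons split: nat.split)

lemma A_iff: "x \<in> A \<longleftrightarrow> (\<exists>p. fqp p \<and> x = poly p T)"
  unfolding A_ring_def fqp_def by auto

lemma v_poly: "fqp p \<Longrightarrow> p \<noteq> 0 \<Longrightarrow> v (poly p T) = real q ^ degree p"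
proof (induction p)
  case 0 thus ?case by simp
next
  case (pCons c p)
  have c: "c \<in> Fq" and p: "fqp p" using pCons.prems by (auto simp: fqp_pCons)
  show ?case
  proof (cases "p = 0")
    case True
    hence "c \<noteq> 0" using pCons by auto
    thus ?thesis using True c v_Fq by simp
  next
    case False
    have vp: "v (poly p T) = real q ^ degree p" using pCons.IH[OF p False] .
    have "v (T * poly p T) = real q ^ Suc (degree p)" by (simp add: v_mult vp vT)
    moreover have "real q ^ Suc (degree p) > 1" using one_less_power[OF q1, of "Suc (degree p)"] by simp
    moreover have "v c \<le> 1" using v_Fq_le[OF c] .
    ultimately have "v (c + T * poly p T) = real q ^ Suc (degree p)" using v_strict[of c "T * poly p T"] by simp
    thus ?thesis using False by simp
  qed
qed

lemma A_v: assumes "x \<in> A" "x \<noteq> 0" shows "\<exists>k. v x = real q ^ k"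
  using assms v_poly unfolding A_iff by (metis poly_0)

lemma A_v_ge1: "x \<in> A \<Longrightarrow> x \<noteq> 0 \<Longrightarrow> v x \<ge> 1"
  using A_v q1 by (metis less_imp_le one_le_power)

lemma A_0: "0 \<in> A" unfolding A_iff by (intro exI[of _ 0]) (simp add: fqp_def F0)
lemma A_Fq: "c \<in> Fq \<Longrightarrow> c \<in> A" unfolding A_iff
  by (intro exI[of _ "[:c:]"]) (auto simp: fqp_def coeff_pCons F0 split: nat.split)
lemma A_1: "1 \<in> A" using A_Fq F1 by blast
lemma A_cT: assumes "c \<in> Fq" "b \<in> A" shows "c + T * b \<in> A"
proof -
  obtain p where p: "fqp p" "b = poly p T" using assms(2) unfolding A_iff by blast
  have "fqp (pCons c p)" using p assms by (simp add: fqp_pCons)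
  thus ?thesis unfolding A_iff using p by (intro exI[of _ "pCons c p"]) simp
qed
lemma A_T: "T \<in> A" using A_cT[OF F0 A_1] by simp
lemma A_add: assumes "x \<in> A" "y \<in> A" shows "x + y \<in> A"
proof -
  obtain p where p: "fqp p" "x = poly p T" using assms(1) unfolding A_iff by blast
  obtain p' where p': "fqp p'" "y = poly p' T" using assms(2) unfolding A_iff by blast
  have "fqp (p + p')" using p p' by (simp add: fqp_def Fadd)
  thus ?thesis unfolding A_iff using p p' by (intro exI[of _ "p + p'"]) (simp add: poly_add)
qed
lemma A_neg: assumes "x \<in> A" shows "- x \<in> A"
proof -
  obtain p where p: "fqp p" "x = poly p T" using assms(1) unfolding A_iff by blast
  have "fqp (- p)" using p by (simp add: fqp_def Fneg)
  thus ?thesis unfolding A_iff using p by (intro exI[of _ "- p"]) simp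
qed
lemma A_diff: "x \<in> A \<Longrightarrow> y \<in> A \<Longrightarrow> x - y \<in> A"
  using A_add A_neg by (metis diff_conv_add_uminus)
lemma A_smult: assumes "c \<in> Fq" "x \<in> A" shows "c * x \<in> A"
proof -
  obtain p where p: "fqp p" "x = poly p T" using assms(2) unfolding A_iff by blast
  have "fqp (smult c p)" using p assms(1) by (simp add: fqp_def Fmult)
  thus ?thesis unfolding A_iff using p by (intro exI[of _ "smult c p"]) simp
qed
lemma A_Tmult: "x \<in> A \<Longrightarrow> T * x \<in> A" using A_cT[OF F0] by simp

lemma A_decomp: assumes "x \<in> A" obtains c b where "c \<in> Fq" "b \<in> A" "x = c + T * b"
proof -
  obtain p where p: "fqp p" "x = poly p T" using assms unfolding A_iff by blast
  obtain c p' where "p = pCons c p'" by (cases p)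
  thus ?thesis using p that by (auto simp: fqp_pCons A_iff)
qed

lemma v_cT: assumes "c \<in> Fq" "b \<in> A" "b \<noteq> 0" shows "v (c + T * b) = real q * v b"
proof -
  have "v (T * b) = real q * v b" by (simp add: v_mult vT)
  moreover have "real q * v b > 1"
  proof -
    have "real q * v b \<ge> real q * 1" using A_v_ge1[OF assms(2,3)] q1 by (intro mult_left_mono) auto
    thus ?thesis using q1 by linarith
  qed
  moreover have "v c \<le> 1" using v_Fq_le[OF assms(1)] .
  ultimately show ?thesis using v_strict[of c "T * b"] by simp
qed

lemma cT_unique:
  assumes "c \<in> Fq" "b \<in> A" "c' \<in> Fq" "b' \<in> A" "c + T * b = c' + T * b'"
  shows "c = c' \<and> b = b'"
proof -
  have "b = b'"
  proof (rule ccontr)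
    assume "b \<noteq> b'"
    hence "b - b' \<noteq> 0" by simp
    hence "v (T * (b - b')) \<ge> real q" using A_v_ge1[OF A_diff[OF assms(2,4)]] q1
      by (simp add: v_mult vT)
    moreover have "T * (b - b') = c' - c" using assms(5) by (simp add: algebra_simps)
    moreover have "v (c' - c) \<le> 1" using v_Fq_le[OF Fdiff[OF assms(3,1)]] .
    ultimately show False using q1 by simp
  qed
  thus ?thesis using assms(5) by simp
qed

definition Ad :: "nat \<Rightarrow> 'k set" where "Ad d = {x \<in> A. v x \<le> real q ^ d}"

lemma Ad_0: "Ad 0 = Fq"
proof
  show "Ad 0 \<subseteq> Fq"
  proof
    fix x assume "x \<in> Ad 0"
    hence x: "x \<in> A" "v x \<le> 1" by (auto simp: Ad_def)
    obtain c b where cb: "c \<in> Fq" "b \<in> A" "x = c + T * b" using A_decomp[OF x(1)] by blast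
    have "b = 0"
    proof (rule ccontr)
      assume "b \<noteq> 0"
      hence "v x = real q * v b" using v_cT cb by simp
      also have "\<dots> \<ge> real q" using A_v_ge1[OF cb(2) \<open>b \<noteq> 0\<close>] q1 by simp
      finally show False using x q1 by simp
    qed
    thus "x \<in> Fq" using cb by simp
  qed
  show "Fq \<subseteq> Ad 0" using A_Fq v_Fq_le by (auto simp: Ad_def)
qed

lemma Ad_Suc: "Ad (Suc d) = (\<lambda>(c,b). c + T * b) ` (Fq \<times> Ad d)"
proof
  show "Ad (Suc d) \<subseteq> (\<lambda>(c,b). c + T * b) ` (Fq \<times> Ad d)"
  proof
    fix x assume "x \<in> Ad (Suc d)"
    hence x: "x \<in> A" "v x \<le> real q ^ Suc d" by (auto simp: Ad_def)
    obtain c b where cb: "c \<in> Fq" "b \<in> A" "x = c + T * b" using A_decomp[OF x(1)] by blast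
    have "v b \<le> real q ^ d"
    proof (cases "b = 0")
      case False
      hence "real q * v b \<le> real q * real q ^ d" using v_cT cb x by simp
      thus ?thesis using q1 by simp
    qed simp
    thus "x \<in> (\<lambda>(c,b). c + T * b) ` (Fq \<times> Ad d)" using cb by (force simp: Ad_def)
  qed
  show "(\<lambda>(c,b). c + T * b) ` (Fq \<times> Ad d) \<subseteq> Ad (Suc d)"
  proof
    fix x assume "x \<in> (\<lambda>(c,b). c + T * b) ` (Fq \<times> Ad d)"
    then obtain c b where cb: "c \<in> Fq" "b \<in> A" "v b \<le> real q ^ d" "x = c + T * b" by (auto simp: Ad_def)
    have "v x \<le> real q ^ Suc d"
    proof (cases "b = 0")
      case True
      have "1 \<le> real q ^ Suc d" by (rule one_le_power) (use q1 in simp)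
      thus ?thesis using True cb v_Fq_le[OF cb(1)] by simp
    next
      case False thus ?thesis using v_cT[OF cb(1,2) False] cb q1 by simp
    qed
    thus "x \<in> Ad (Suc d)" using cb A_cT by (simp add: Ad_def)
  qed
qed

lemma Ad_card: "finite (Ad d) \<and> card (Ad d) = q ^ Suc d"
proof (induction d)
  case 0 thus ?case using Ad_0 finF cardF by simp
next
  case (Suc d)
  have inj: "inj_on (\<lambda>(c,b). c + T * b) (Fq \<times> Ad d)"
    using cT_unique by (auto simp: inj_on_def Ad_def)
  show ?case unfolding Ad_Suc using Suc finF cardF card_image[OF inj]
    by (simp add: card_cartesian_product)
qed

lemma Ad_sub: "Ad d \<subseteq> A" by (auto simp: Ad_def)

lemma A_ball_finite: "finite {x \<in> A. v x \<le> r}"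
proof -
  obtain d where "r < real q ^ d" using real_arch_pow[OF q1] by blast
  hence "{x \<in> A. v x \<le> r} \<subseteq> Ad d" by (auto simp: Ad_def)
  thus ?thesis using Ad_card finite_subset by blast
qed

lemma K_sub_Kinf: "x \<in> K_field Fq T \<Longrightarrow> x \<in> Kinf Fq T v"
  unfolding Kinf_def by (auto intro!: bexI[of _ x])

lemma A_sub_K: "x \<in> A \<Longrightarrow> x \<in> K_field Fq T"
proof -
  assume "x \<in> A"
  hence "\<exists>a b. x = a / b \<and> a \<in> A \<and> b \<in> A \<and> b \<noteq> 0" using A_1 by (intro exI[of _ x] exI[of _ 1]) simp
  thus ?thesis unfolding K_field_def by simp
qed

lemma A_Kinf: "x \<in> A \<Longrightarrow> x \<in> Kinf Fq T v" using A_sub_K K_sub_Kinf by blast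

lemma A_shift_Kinf: "x \<in> A \<Longrightarrow> c \<in> Fq \<Longrightarrow> x - c / T \<in> Kinf Fq T v"
proof -
  assume x: "x \<in> A" and c: "c \<in> Fq"
  have "x - c / T = (T * x - c) / T" using T_nz by (simp add: field_simps)
  moreover have "T * x - c \<in> A" using A_diff[OF A_Tmult[OF x] A_Fq[OF c]] .
  ultimately have "x - c / T \<in> K_field Fq T" unfolding K_field_def using A_T T_nz by blast
  thus ?thesis by (rule K_sub_Kinf)
qed

end

locale lat = cm Fq q T v for Fq :: "'k::field set" and q T v +
  fixes w1 w2 :: 'k and na nb :: nat
  assumes orth: "orthogonal3 Fq T v w1 w2 1"
    and vw1: "v w1 = real q ^ na" and vw2: "v w2 = real q ^ nb" and nab: "nb \<le> na"
begin

abbreviation "Lam \<equiv> lattice3 Fq T w1 w2"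
abbreviation "KI \<equiv> Kinf Fq T v"

lemma v_comb:
  assumes "x1 \<in> KI" "x2 \<in> KI" "x3 \<in> KI"
  shows "v (x1 * w1 + x2 * w2 + x3) = max (v x1 * real q ^ na) (max (v x2 * real q ^ nb) (v x3))"
  using orth assms unfolding orthogonal3_def by (auto simp: v_mult vw1 vw2)

lemma lat_iff: "l \<in> Lam \<longleftrightarrow> (\<exists>a1 a2 a3. a1 \<in> A \<and> a2 \<in> A \<and> a3 \<in> A \<and> l = a1 * w1 + a2 * w2 + a3)"
  unfolding lattice3_def by auto

lemma qpow_pos: "real q ^ n > 0" using q1 by simp
lemma qpow_ge1: "real q ^ n \<ge> 1" using q1 by simp

lemma coord_unique:
  assumes "a1 \<in> A" "a2 \<in> A" "a3 \<in> A" "b1 \<in> A" "b2 \<in> A" "b3 \<in> A"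
    and "a1 * w1 + a2 * w2 + a3 = b1 * w1 + b2 * w2 + b3"
  shows "a1 = b1 \<and> a2 = b2 \<and> a3 = b3"
proof -
  have "(a1 - b1) * w1 + (a2 - b2) * w2 + (a3 - b3) = 0" using assms(7) by (simp add: algebra_simps)
  hence "max (v (a1 - b1) * real q ^ na) (max (v (a2 - b2) * real q ^ nb) (v (a3 - b3))) = 0"
    using v_comb[OF A_Kinf[OF A_diff[OF assms(1,4)]] A_Kinf[OF A_diff[OF assms(2,5)]] A_Kinf[OF A_diff[OF assms(3,6)]]] by simp
  hence "v (a1 - b1) * real q ^ na = 0" "v (a2 - b2) * real q ^ nb = 0" "v (a3 - b3) = 0"
    using v_nonneg[of "a1 - b1"] v_nonneg[of "a2 - b2"] v_nonneg[of "a3 - b3"] qpow_pos[of na] qpow_pos[of nb]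
    by (smt (verit, best) mult_nonneg_nonneg)+
  thus ?thesis using qpow_pos[of na] qpow_pos[of nb] q2 by simp
qed

lemma v_lat: "a1 \<in> A \<Longrightarrow> a2 \<in> A \<Longrightarrow> a3 \<in> A \<Longrightarrow>
  v (a1 * w1 + a2 * w2 + a3) = max (v a1 * real q ^ na) (max (v a2 * real q ^ nb) (v a3))"
  by (rule v_comb) (auto intro: A_Kinf)

lemma lat_0: "0 \<in> Lam" unfolding lat_iff using A_0 by (intro exI[of _ 0]) simp

lemma lat_add: assumes "x \<in> Lam" "y \<in> Lam" shows "x + y \<in> Lam"
proof -
  obtain a1 a2 a3 where a: "a1 \<in> A" "a2 \<in> A" "a3 \<in> A" "x = a1 * w1 + a2 * w2 + a3" using assms(1) lat_iff by blast
  obtain b1 b2 b3 where b: "b1 \<in> A" "b2 \<in> A" "b3 \<in> A" "y = b1 * w1 + b2 * w2 + b3" using assms(2) lat_iff by blast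
  have "x + y = (a1 + b1) * w1 + (a2 + b2) * w2 + (a3 + b3)" using a b by (simp add: algebra_simps)
  thus ?thesis unfolding lat_iff using a b A_add by blast
qed

lemma lat_neg: assumes "x \<in> Lam" shows "- x \<in> Lam"
proof -
  obtain a1 a2 a3 where a: "a1 \<in> A" "a2 \<in> A" "a3 \<in> A" "x = a1 * w1 + a2 * w2 + a3" using assms(1) lat_iff by blast
  have "- x = (- a1) * w1 + (- a2) * w2 + (- a3)" using a by (simp add: algebra_simps)
  thus ?thesis unfolding lat_iff using a A_neg by blast
qed

lemma lat_smult: assumes "c \<in> Fq" "x \<in> Lam" shows "c * x \<in> Lam"
proof -
  obtain a1 a2 a3 where a: "a1 \<in> A" "a2 \<in> A" "a3 \<in> A" "x = a1 * w1 + a2 * w2 + a3" using assms(2) lat_iff by blast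
  have "c * x = (c * a1) * w1 + (c * a2) * w2 + (c * a3)" using a by (simp add: algebra_simps)
  thus ?thesis unfolding lat_iff using a A_smult[OF assms(1)] by blast
qed

lemma lat_v_pow: assumes "l \<in> Lam" "l \<noteq> 0" shows "\<exists>k. v l = real q ^ k"
proof -
  obtain a1 a2 a3 where a: "a1 \<in> A" "a2 \<in> A" "a3 \<in> A" "l = a1 * w1 + a2 * w2 + a3" using assms(1) lat_iff by blast
  have pw: "\<exists>k. v x * real q ^ n = real q ^ k \<or> x = 0" if "x \<in> A" for x n
    using A_v[OF that] by (metis power_add)
  obtain k1 where k1: "v a1 * real q ^ na = real q ^ k1 \<or> a1 = 0" using pw[OF a(1)] by blast
  obtain k2 where k2: "v a2 * real q ^ nb = real q ^ k2 \<or> a2 = 0" using pw[OF a(2)] by blast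
  obtain k3 where k3: "v a3 * real q ^ 0 = real q ^ k3 \<or> a3 = 0" using pw[OF a(3)] by blast
  have vl: "v l = max (v a1 * real q ^ na) (max (v a2 * real q ^ nb) (v a3))" using v_lat a by simp
  have "v l \<noteq> 0" using assms by simp
  thus ?thesis using vl k1 k2 k3 by (auto simp: max_def)
qed

lemma lat_v_ge1: "l \<in> Lam \<Longrightarrow> l \<noteq> 0 \<Longrightarrow> v l \<ge> 1"
  using lat_v_pow qpow_ge1 by metis

definition B :: "real \<Rightarrow> 'k set" where "B r = {l \<in> Lam. v l \<le> r}"

lemma B_finite: "finite (B r)"
proof -
  let ?S = "{x \<in> A. v x \<le> r}"
  have "B r \<subseteq> (\<lambda>(a1,a2,a3). a1 * w1 + a2 * w2 + a3) ` (?S \<times> ?S \<times> ?S)"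
  proof
    fix l assume "l \<in> B r"
    then obtain a1 a2 a3 where a: "a1 \<in> A" "a2 \<in> A" "a3 \<in> A" "l = a1 * w1 + a2 * w2 + a3" "v l \<le> r"
      unfolding B_def lat_iff by blast
    have vl: "v l = max (v a1 * real q ^ na) (max (v a2 * real q ^ nb) (v a3))" using v_lat a by simp
    have "v a1 * 1 \<le> v a1 * real q ^ na" "v a2 * 1 \<le> v a2 * real q ^ nb"
      by (intro mult_left_mono qpow_ge1 v_nonneg)+
    hence "v a1 \<le> r" "v a2 \<le> r" "v a3 \<le> r" using vl a(5) by auto
    thus "l \<in> (\<lambda>(a1,a2,a3). a1 * w1 + a2 * w2 + a3) ` (?S \<times> ?S \<times> ?S)" using a by force
  qed
  thus ?thesis using A_ball_finite by (meson finite_SigmaI finite_imageI finite_subset)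
qed

lemma B_addsub: "r \<ge> 0 \<Longrightarrow> addsub (B r)"
  unfolding addsub_def B_def using B_finite lat_0 lat_add lat_neg v_add
  by (auto simp: B_def intro: order_trans[OF v_add])

lemma B_fstable: "fstable Fq (B r)"
  unfolding fstable_def B_def
proof (intro ballI)
  fix c w assume c: "c \<in> Fq" and w: "w \<in> {l \<in> Lam. v l \<le> r}"
  have "v (c * w) \<le> v w" using v_Fq_le[OF c] by (simp add: v_mult mult_left_le_one_le)
  thus "c * w \<in> {l \<in> Lam. v l \<le> r}" using w lat_smult[OF c] by auto
qed

end

context lat
begin

definition ucomb :: "'k \<Rightarrow> 'k \<Rightarrow> 'k \<Rightarrow> 'k" where
  "ucomb c1 c2 c3 = (c1 * w1 + c2 * w2 + c3) / T"

definition "U1 = sstep Fq {0} (w1 / T)"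
definition "U2 = sstep Fq U1 (w2 / T)"
definition "U3 = sstep Fq U2 (1 / T)"

lemma sstep_iff: "u \<in> sstep F W y \<longleftrightarrow> (\<exists>c\<in>F. \<exists>w\<in>W. u = c * y + w)"
  unfolding sstep_mem by blast

lemma ucomb_step1: "c1 * (w1 / T) + 0 = ucomb c1 0 0" by (simp add: ucomb_def)
lemma ucomb_step2: "c2 * (w2 / T) + ucomb c1 0 0 = ucomb c1 c2 0" by (simp add: ucomb_def add_divide_distrib)
lemma ucomb_step3: "c3 * (1 / T) + ucomb c1 c2 0 = ucomb c1 c2 c3" by (simp add: ucomb_def add_divide_distrib)

lemma U1m: "u \<in> U1 \<longleftrightarrow> (\<exists>c1\<in>Fq. u = ucomb c1 0 0)"
  unfolding U1_def sstep_iff using ucomb_step1 by auto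

lemma U2m: "u \<in> U2 \<longleftrightarrow> (\<exists>c1\<in>Fq. \<exists>c2\<in>Fq. u = ucomb c1 c2 0)"
proof
  assume "u \<in> U2"
  then obtain c2 w where "c2 \<in> Fq" "w \<in> U1" "u = c2 * (w2 / T) + w" unfolding U2_def sstep_iff by blast
  moreover then obtain c1 where "c1 \<in> Fq" "w = ucomb c1 0 0" using U1m by blast
  ultimately show "\<exists>c1\<in>Fq. \<exists>c2\<in>Fq. u = ucomb c1 c2 0" using ucomb_step2 by metis
next
  assume "\<exists>c1\<in>Fq. \<exists>c2\<in>Fq. u = ucomb c1 c2 0"
  then obtain c1 c2 where c: "c1 \<in> Fq" "c2 \<in> Fq" "u = ucomb c1 c2 0" by blast
  hence "ucomb c1 0 0 \<in> U1" using U1m by blast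
  thus "u \<in> U2" unfolding U2_def sstep_iff using c ucomb_step2 by metis
qed

lemma U3_mem: "u \<in> U3 \<longleftrightarrow> (\<exists>c1 c2 c3. c1 \<in> Fq \<and> c2 \<in> Fq \<and> c3 \<in> Fq \<and> u = ucomb c1 c2 c3)"
proof
  assume "u \<in> U3"
  then obtain c3 w where "c3 \<in> Fq" "w \<in> U2" "u = c3 * (1 / T) + w" unfolding U3_def sstep_iff by blast
  moreover then obtain c1 c2 where "c1 \<in> Fq" "c2 \<in> Fq" "w = ucomb c1 c2 0" using U2m by blast
  ultimately show "\<exists>c1 c2 c3. c1 \<in> Fq \<and> c2 \<in> Fq \<and> c3 \<in> Fq \<and> u = ucomb c1 c2 c3" using ucomb_step3 by metis
next
  assume "\<exists>c1 c2 c3. c1 \<in> Fq \<and> c2 \<in> Fq \<and> c3 \<in> Fq \<and> u = ucomb c1 c2 c3"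
  then obtain c1 c2 c3 where c: "c1 \<in> Fq" "c2 \<in> Fq" "c3 \<in> Fq" "u = ucomb c1 c2 c3" by blast
  hence "ucomb c1 c2 0 \<in> U2" using U2m by blast
  thus "u \<in> U3" unfolding U3_def sstep_iff using c ucomb_step3 by metis
qed

lemma ucomb_inj:
  assumes "c1 \<in> Fq" "c2 \<in> Fq" "c3 \<in> Fq" "d1 \<in> Fq" "d2 \<in> Fq" "d3 \<in> Fq"
    "ucomb c1 c2 c3 = ucomb d1 d2 d3"
  shows "c1 = d1 \<and> c2 = d2 \<and> c3 = d3"
proof -
  have "c1 * w1 + c2 * w2 + c3 = d1 * w1 + d2 * w2 + d3" using assms(7) T_nz by (simp add: ucomb_def)
  thus ?thesis using coord_unique assms A_Fq by blast
qed

lemma ucomb_alt: "ucomb c1 c2 c3 = (c1 / T) * w1 + (c2 / T) * w2 + c3 / T"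
  unfolding ucomb_def by (simp add: add_divide_distrib)

lemma Fq_div_T_Kinf: "c \<in> Fq \<Longrightarrow> c / T \<in> KI"
  using A_shift_Kinf[OF A_0 Fneg] by (metis diff_0 minus_divide_left minus_minus)

lemma v_cT_div: "c \<in> Fq \<Longrightarrow> v (c / T) = v c / real q"
  by (simp add: v_divide vT)

lemma v_A_minus: assumes "a \<in> A" "c \<in> Fq" shows "v (a - c / T) = max (v a) (v c / real q)"
proof (cases "a = 0")
  case True thus ?thesis using v_cT_div[OF assms(2)] by simp
next
  case False
  have "v (c / T) \<le> 1 / real q" using v_cT_div[OF assms(2)] v_Fq_le[OF assms(2)] q1 by (simp add: divide_right_mono)
  also have "\<dots> < 1" using q1 by simp
  also have "1 \<le> v a" using A_v_ge1[OF assms(1) False] .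
  finally have lt: "v (c / T) < v a" .
  hence "v (a - c / T) = v a" by (rule v_strict_diff)
  thus ?thesis using lt v_cT_div[OF assms(2)] by simp
qed

lemma v_ucomb: assumes "c1 \<in> Fq" "c2 \<in> Fq" "c3 \<in> Fq"
  shows "v (ucomb c1 c2 c3) = max (v c1 * real q ^ na) (max (v c2 * real q ^ nb) (v c3)) / real q"
proof -
  have "v (ucomb c1 c2 c3) = max (v (c1/T) * real q ^ na) (max (v (c2/T) * real q ^ nb) (v (c3/T)))"
    unfolding ucomb_alt by (rule v_comb) (use Fq_div_T_Kinf assms in auto)
  also have "\<dots> = max (v c1 * real q ^ na) (max (v c2 * real q ^ nb) (v c3)) / real q"
    using q1 by (simp add: v_cT_div[OF assms(1)] v_cT_div[OF assms(2)] v_cT_div[OF assms(3)] max_divide_distrib_right)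
  finally show ?thesis .
qed

lemma max_mult_right: "(k::real) \<ge> 0 \<Longrightarrow> max x y * k = max (x * k) (y * k)"
  using max_mult_distrib_right[of x y k] by simp

lemma max6: "max (max a b) (max (max c d) (max e f)) = max (max a (max c (e::real))) (max b (max d f))"
  by (simp add: max.assoc max.left_commute max.commute)

lemma v_lat_minus_U:
  assumes l: "l \<in> Lam" and u: "u \<in> U3"
  shows "v (l - u) = max (v l) (v u)"
proof -
  obtain a1 a2 a3 where a: "a1 \<in> A" "a2 \<in> A" "a3 \<in> A" "l = a1 * w1 + a2 * w2 + a3" using l lat_iff by blast
  obtain c1 c2 c3 where c: "c1 \<in> Fq" "c2 \<in> Fq" "c3 \<in> Fq" "u = ucomb c1 c2 c3" using u U3_mem by blast
  have "l - u = (a1 - c1 / T) * w1 + (a2 - c2 / T) * w2 + (a3 - c3 / T)"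
    using a c by (simp add: ucomb_alt algebra_simps)
  hence "v (l - u) = v ((a1 - c1 / T) * w1 + (a2 - c2 / T) * w2 + (a3 - c3 / T))" by simp
  also have "\<dots> = max (v (a1 - c1 / T) * real q ^ na) (max (v (a2 - c2 / T) * real q ^ nb) (v (a3 - c3 / T)))"
    by (rule v_comb) (use A_shift_Kinf a c in auto)
  also have "\<dots> = max (max (v a1 * real q ^ na) (v c1 / real q * real q ^ na))
      (max (max (v a2 * real q ^ nb) (v c2 / real q * real q ^ nb)) (max (v a3) (v c3 / real q)))"
    using a c by (simp add: v_A_minus max_mult_right[OF less_imp_le[OF qpow_pos]])
  also have "\<dots> = max (max (v a1 * real q ^ na) (max (v a2 * real q ^ nb) (v a3)))
     (max (v c1 / real q * real q ^ na) (max (v c2 / real q * real q ^ nb) (v c3 / real q)))"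
    by (rule max6)
  also have "max (v a1 * real q ^ na) (max (v a2 * real q ^ nb) (v a3)) = v l" using v_lat a by simp
  also have "max (v c1 / real q * real q ^ na) (max (v c2 / real q * real q ^ nb) (v c3 / real q)) = v u"
    using c q1 by (simp add: v_ucomb max_divide_distrib_right)
  finally show ?thesis .
qed

lemma U_chain:
  shows "addsub U1" "fstable Fq U1" "card U1 = q" "w1 / T \<in> U1"
    and "addsub U2" "fstable Fq U2" "card U2 = q * q" "U1 \<subseteq> U2" "w2 / T \<in> U2"
    and "addsub U3" "fstable Fq U3" "card U3 = q * q * q" "U2 \<subseteq> U3" "1 / T \<in> U3"
    and "w1 / T \<noteq> 0" "w2 / T \<notin> U1" "1 / T \<notin> U2"
proof -
  have a0: "addsub {0::'k}" by (simp add: addsub_def)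
  have f0: "fstable Fq {0::'k}" by (simp add: fstable_def)
  have w1nz: "w1 \<noteq> 0" using vw1 qpow_pos[of na] by auto
  show n1: "w1 / T \<noteq> 0" using w1nz T_nz by simp
  hence n1': "w1 / T \<notin> {0}" by simp
  note P1 = sstep_props[OF a0 f0 n1']
  show "addsub U1" "fstable Fq U1" "w1 / T \<in> U1" using P1 by (auto simp: U1_def)
  show "card U1 = q" using P1 cardF by (simp add: U1_def)
  show n2: "w2 / T \<notin> U1"
  proof
    assume "w2 / T \<in> U1"
    then obtain c where "c \<in> Fq" "w2 / T = ucomb c 0 0" using U1m by blast
    moreover have "w2 / T = ucomb 0 1 0" by (simp add: ucomb_def)
    ultimately show False using ucomb_inj[of 0 1 0 c 0 0] F0 F1 by auto
  qed
  note P2 = sstep_props[OF \<open>addsub U1\<close> \<open>fstable Fq U1\<close> n2]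
  show "addsub U2" "fstable Fq U2" "U1 \<subseteq> U2" "w2 / T \<in> U2" using P2 by (auto simp: U2_def)
  show "card U2 = q * q" using P2 cardF \<open>card U1 = q\<close> by (simp add: U2_def)
  show n3: "1 / T \<notin> U2"
  proof
    assume "1 / T \<in> U2"
    then obtain c d where "c \<in> Fq" "d \<in> Fq" "1 / T = ucomb c d 0" using U2m by blast
    moreover have "1 / T = ucomb 0 0 1" by (simp add: ucomb_def)
    ultimately show False using ucomb_inj[of 0 0 1 c d 0] F0 F1 by auto
  qed
  note P3 = sstep_props[OF \<open>addsub U2\<close> \<open>fstable Fq U2\<close> n3]
  show "addsub U3" "fstable Fq U3" "U2 \<subseteq> U3" "1 / T \<in> U3" using P3 by (auto simp: U3_def)
  show "card U3 = q * q * q" using P3 cardF \<open>card U2 = q * q\<close> by (simp add: U3_def)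
qed

lemma U3_fin: "finite U3" "0 \<in> U3" using U_chain(10) by (auto simp: addsub_def)

end

context lat
begin

lemma vcT_ge: assumes "c \<in> Fq" "b \<in> A" shows "real q * v b \<le> v (c + T * b)"
  using v_cT[OF assms] by (cases "b = 0") auto

lemma vcT_le: assumes "c \<in> Fq" "b \<in> A" shows "v (c + T * b) \<le> max 1 (real q * v b)"
  using v_cT[OF assms] v_Fq_le[OF assms(1)] by (cases "b = 0") auto

lemma TuW: "T * (ucomb c1 c2 c3 + (b1 * w1 + b2 * w2 + b3)) = (c1 + T * b1) * w1 + (c2 + T * b2) * w2 + (c3 + T * b3)"
  unfolding ucomb_def using T_nz by (simp add: field_simps)

lemma term_bound:
  assumes "c \<in> Fq" "b \<in> A" "k \<le> r" "real q * (v b * k) \<le> r" "k \<ge> 0"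
  shows "v (c + T * b) * k \<le> r"
proof (cases "b = 0")
  case True
  have "v c * k \<le> 1 * k" using v_Fq_le[OF assms(1)] assms(5) by (intro mult_right_mono) auto
  thus ?thesis using True assms(3) by simp
next
  case False
  thus ?thesis using v_cT[OF assms(1,2) False] assms(4) by (simp add: mult.assoc)
qed

lemma B_mono: "r \<le> r' \<Longrightarrow> B r \<subseteq> B r'" unfolding B_def by auto

lemma qna_le: "real q ^ nb \<le> real q ^ na" using nab q1 by (simp add: power_increasing)

lemma decomp:
  assumes r: "r \<ge> real q ^ Suc na"
  shows "(\<lambda>x. x / T) ` B r = (\<lambda>(u,w). u + w) ` (U3 \<times> B (r / real q))"
    and "inj_on (\<lambda>(u,w). u + w) (U3 \<times> B (r / real q))"
proof -
  show "inj_on (\<lambda>(u,w). u + w) (U3 \<times> B (r / real q))"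
  proof (rule inj_onI, clarify)
    fix u w u' w' assume u: "u \<in> U3" "w \<in> B (r / real q)" "u' \<in> U3" "w' \<in> B (r / real q)" "u + w = u' + w'"
    obtain c1 c2 c3 where c: "c1 \<in> Fq" "c2 \<in> Fq" "c3 \<in> Fq" "u = ucomb c1 c2 c3" using u(1) U3_mem by blast
    obtain d1 d2 d3 where d: "d1 \<in> Fq" "d2 \<in> Fq" "d3 \<in> Fq" "u' = ucomb d1 d2 d3" using u(3) U3_mem by blast
    obtain b1 b2 b3 where b: "b1 \<in> A" "b2 \<in> A" "b3 \<in> A" "w = b1 * w1 + b2 * w2 + b3" using u(2) unfolding B_def lat_iff by blast
    obtain e1 e2 e3 where e: "e1 \<in> A" "e2 \<in> A" "e3 \<in> A" "w' = e1 * w1 + e2 * w2 + e3" using u(4) unfolding B_def lat_iff by blast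
    have "(c1 + T * b1) * w1 + (c2 + T * b2) * w2 + (c3 + T * b3) = (d1 + T * e1) * w1 + (d2 + T * e2) * w2 + (d3 + T * e3)"
      using u(5) TuW[of c1 c2 c3 b1 b2 b3] TuW[of d1 d2 d3 e1 e2 e3] c d b e by simp
    hence eqs: "c1 + T * b1 = d1 + T * e1 \<and> c2 + T * b2 = d2 + T * e2 \<and> c3 + T * b3 = d3 + T * e3"
      by (rule coord_unique[OF A_cT[OF c(1) b(1)] A_cT[OF c(2) b(2)] A_cT[OF c(3) b(3)] A_cT[OF d(1) e(1)] A_cT[OF d(2) e(2)] A_cT[OF d(3) e(3)]])
    have "c1 = d1 \<and> b1 = e1" using cT_unique[OF c(1) b(1) d(1) e(1)] eqs by simp
    moreover have "c2 = d2 \<and> b2 = e2" using cT_unique[OF c(2) b(2) d(2) e(2)] eqs by simp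
    moreover have "c3 = d3 \<and> b3 = e3" using cT_unique[OF c(3) b(3) d(3) e(3)] eqs by simp
    ultimately show "u = u' \<and> w = w'" using c d b e by simp
  qed
  show "(\<lambda>x. x / T) ` B r = (\<lambda>(u,w). u + w) ` (U3 \<times> B (r / real q))"
  proof
    show "(\<lambda>x. x / T) ` B r \<subseteq> (\<lambda>(u,w). u + w) ` (U3 \<times> B (r / real q))"
    proof
      fix y assume "y \<in> (\<lambda>x. x / T) ` B r"
      then obtain x where x: "x \<in> B r" "y = x / T" by blast
      obtain a1 a2 a3 where a: "a1 \<in> A" "a2 \<in> A" "a3 \<in> A" "x = a1 * w1 + a2 * w2 + a3" "v x \<le> r"
        using x(1) unfolding B_def lat_iff by blast
      obtain c1 b1 where cb1: "c1 \<in> Fq" "b1 \<in> A" "a1 = c1 + T * b1" using A_decomp[OF a(1)] by blast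
      obtain c2 b2 where cb2: "c2 \<in> Fq" "b2 \<in> A" "a2 = c2 + T * b2" using A_decomp[OF a(2)] by blast
      obtain c3 b3 where cb3: "c3 \<in> Fq" "b3 \<in> A" "a3 = c3 + T * b3" using A_decomp[OF a(3)] by blast
      define u where "u = ucomb c1 c2 c3"
      define w where "w = b1 * w1 + b2 * w2 + b3"
      have uU: "u \<in> U3" unfolding u_def U3_mem using cb1 cb2 cb3 by blast
      have wL: "w \<in> Lam" unfolding w_def lat_iff using cb1 cb2 cb3 by blast
      have vx: "v x = max (v a1 * real q ^ na) (max (v a2 * real q ^ nb) (v a3))" using v_lat a by simp
      have vw: "v w = max (v b1 * real q ^ na) (max (v b2 * real q ^ nb) (v b3))"
        unfolding w_def using v_lat cb1 cb2 cb3 by simp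
      have m: "v a1 * real q ^ na \<le> v x" "v a2 * real q ^ nb \<le> v x" "v a3 \<le> v x" unfolding vx by auto
      have t1: "(real q * v b1) * real q ^ na \<le> v a1 * real q ^ na"
        using vcT_ge[OF cb1(1,2)] cb1(3) by (intro mult_right_mono) auto
      have t2: "(real q * v b2) * real q ^ nb \<le> v a2 * real q ^ nb"
        using vcT_ge[OF cb2(1,2)] cb2(3) by (intro mult_right_mono) auto
      have t3: "real q * v b3 \<le> v a3" using vcT_ge[OF cb3(1,2)] cb3(3) by simp
      have "real q * (v b1 * real q ^ na) \<le> v x" "real q * (v b2 * real q ^ nb) \<le> v x" "real q * v b3 \<le> v x"
        using t1 t2 t3 m by (simp_all add: mult.assoc)
      hence "v b1 * real q ^ na \<le> v x / real q" "v b2 * real q ^ nb \<le> v x / real q" "v b3 \<le> v x / real q"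
        using q1 by (simp_all add: le_divide_eq mult.commute)
      hence "v w \<le> v x / real q" unfolding vw by simp
      hence "real q * v w \<le> v x" using q1 by (simp add: field_simps)
      hence "v w \<le> r / real q" using a(5) q1 by (simp add: field_simps)
      hence "w \<in> B (r / real q)" using wL by (simp add: B_def)
      moreover have "y = u + w"
      proof -
        have "T * (u + w) = x" unfolding u_def w_def using TuW a cb1 cb2 cb3 by simp
        hence "u + w = x / T" using T_nz by (simp add: eq_divide_eq mult.commute)
        thus ?thesis using x(2) by simp
      qed
      ultimately show "y \<in> (\<lambda>(u,w). u + w) ` (U3 \<times> B (r / real q))" using uU by force
    qed
    show "(\<lambda>(u,w). u + w) ` (U3 \<times> B (r / real q)) \<subseteq> (\<lambda>x. x / T) ` B r"
    proof clarify
      fix u w assume u: "u \<in> U3" and w: "w \<in> B (r / real q)"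
      obtain c1 c2 c3 where c: "c1 \<in> Fq" "c2 \<in> Fq" "c3 \<in> Fq" "u = ucomb c1 c2 c3" using u U3_mem by blast
      obtain b1 b2 b3 where b: "b1 \<in> A" "b2 \<in> A" "b3 \<in> A" "w = b1 * w1 + b2 * w2 + b3" "v w \<le> r / real q"
        using w unfolding B_def lat_iff by blast
      define x where "x = (c1 + T * b1) * w1 + (c2 + T * b2) * w2 + (c3 + T * b3)"
      have xL: "x \<in> Lam" unfolding x_def lat_iff using A_cT b c by blast
      have vw: "v w = max (v b1 * real q ^ na) (max (v b2 * real q ^ nb) (v b3))"
        using v_lat b by simp
      have qw: "real q * v w \<le> r" using b(5) q1 by (simp add: field_simps)
      have rq: "real q ^ na \<le> r"
      proof -
        have "real q ^ na \<le> real q ^ Suc na" using q1 by (intro power_increasing) auto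
        thus ?thesis using r by linarith
      qed
      have m: "v b1 * real q ^ na \<le> v w" "v b2 * real q ^ nb \<le> v w" "v b3 \<le> v w" unfolding vw by auto
      have qq: "real q \<ge> 0" by simp
      have s1: "v (c1 + T * b1) * real q ^ na \<le> r"
      proof (rule term_bound[OF c(1) b(1) rq])
        show "real q * (v b1 * real q ^ na) \<le> r" using mult_left_mono[OF m(1) qq] qw by linarith
      qed simp
      have s2: "v (c2 + T * b2) * real q ^ nb \<le> r"
      proof (rule term_bound[OF c(2) b(2)])
        show "real q * (v b2 * real q ^ nb) \<le> r" using mult_left_mono[OF m(2) qq] qw by linarith
        show "real q ^ nb \<le> r" using qna_le rq by linarith
      qed simp
      have s3: "v (c3 + T * b3) * 1 \<le> r"
      proof (rule term_bound[OF c(3) b(3)])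
        show "real q * (v b3 * 1) \<le> r" using mult_left_mono[OF m(3) qq] qw by simp
        show "1 \<le> r" using qpow_ge1[of na] rq by linarith
      qed simp
      have "v x \<le> r" unfolding x_def using v_lat[OF A_cT[OF c(1) b(1)] A_cT[OF c(2) b(2)] A_cT[OF c(3) b(3)]] s1 s2 s3
        by simp
      hence "x \<in> B r" using xL by (simp add: B_def)
      moreover have "u + w = x / T" using TuW[of c1 c2 c3 b1 b2 b3] c b T_nz unfolding x_def
        by (simp add: field_simps)
      ultimately show "u + w \<in> (\<lambda>x. x / T) ` B r" by blast
    qed
  qed
qed

end

context cm
begin

lemma prod_near_one:
  assumes "finite I" "\<And>i. i \<in> I \<Longrightarrow> v (f i - 1) \<le> d" "0 \<le> d" "d \<le> 1"
  shows "v ((\<Prod>i\<in>I. f i) - 1) \<le> d"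
  using assms
proof (induction I rule: finite_induct)
  case empty thus ?case by simp
next
  case (insert x I)
  let ?P = "\<Prod>i\<in>I. f i"
  have IH: "v (?P - 1) \<le> d" using insert by auto
  have vP: "v ?P \<le> 1"
  proof -
    have "v ?P = v ((?P - 1) + 1)" by simp
    also have "\<dots> \<le> max (v (?P - 1)) (v 1)" by (rule v_add)
    finally show ?thesis using IH insert.prems by simp
  qed
  have "f x * ?P - 1 = (f x - 1) * ?P + (?P - 1)" by (simp add: algebra_simps)
  hence "v (f x * ?P - 1) \<le> max (v ((f x - 1) * ?P)) (v (?P - 1))" using v_add by metis
  also have "v ((f x - 1) * ?P) \<le> d"
  proof -
    have "v ((f x - 1) * ?P) = v (f x - 1) * v ?P" by (rule v_mult)
    also have "\<dots> \<le> d * 1" using insert.prems vP by (intro mult_mono) auto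
    finally show ?thesis by simp
  qed
  finally show ?case using IH insert by simp
qed

end

context lat
begin

definition Qp :: "real \<Rightarrow> 'k \<Rightarrow> 'k" where "Qp r z = (\<Prod>l\<in>B r - {0}. (1 - z / l))"

lemma PW_B: "PW (B r) z = z * Qp r z" unfolding PW_def Qp_def by simp

lemma B_nat: "{l \<in> Lam. l \<noteq> 0 \<and> v l \<le> real n} = B (real n) - {0}" unfolding B_def by auto

lemma Qp_split:
  assumes "r \<le> r'" "0 \<le> r"
  shows "Qp r' z = Qp r z * (\<Prod>l\<in>B r' - B r. (1 - z / l))"
proof -
  have "B r' - {0} = (B r - {0}) \<union> (B r' - B r)" using B_mono[OF assms(1)] B_def lat_0 assms by auto
  moreover have "(B r - {0}) \<inter> (B r' - B r) = {}" by auto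
  ultimately show ?thesis unfolding Qp_def using B_finite by (simp add: prod.union_disjoint)
qed

lemma new_factors:
  assumes "r \<le> r'" "r > 0" "l \<in> B r' - B r"
  shows "v (1 - z / l) \<le> max 1 (v z / r)" "v ((1 - z / l) - 1) \<le> v z / r"
    and "v z \<le> r \<Longrightarrow> v (1 - z / l) = 1"
proof -
  have vl: "v l > r" "l \<noteq> 0" using assms by (auto simp: B_def)
  have vzl: "v (z / l) \<le> v z / r" using vl assms(2) by (simp add: v_divide frac_le)
  show "v ((1 - z / l) - 1) \<le> v z / r" using vzl by simp
  show "v (1 - z / l) \<le> max 1 (v z / r)" using v_diff[of 1 "z / l"] vzl by simp
  assume "v z \<le> r"
  hence "v (z / l) < 1" using vl v_pos[OF vl(2)] by (simp add: v_divide divide_less_eq)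
  thus "v (1 - z / l) = 1" using v_strict_diff[of "z / l" 1] by simp
qed

lemma Qp_const:
  assumes "v z \<le> r" "r \<le> r'" "r > 0"
  shows "v (Qp r' z) = v (Qp r z)"
proof -
  have "v (\<Prod>l\<in>B r' - B r. (1 - z / l)) = (\<Prod>l\<in>B r' - B r. v (1 - z / l))" by (rule v_prod)
  also have "\<dots> = 1" using new_factors(3)[OF assms(2,3) _ assms(1)] by simp
  finally show ?thesis using Qp_split[OF assms(2) less_imp_le[OF assms(3)]] by (simp add: v_mult)
qed

lemma Qp_diff:
  assumes "v z \<le> r" "r \<le> r'" "r > 0"
  shows "v (Qp r' z - Qp r z) \<le> v (Qp r z) * (v z / r)"
proof -
  have "Qp r' z - Qp r z = Qp r z * ((\<Prod>l\<in>B r' - B r. (1 - z / l)) - 1)"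
    using Qp_split[OF assms(2) less_imp_le[OF assms(3)]] by (simp add: algebra_simps)
  hence "v (Qp r' z - Qp r z) = v (Qp r z) * v ((\<Prod>l\<in>B r' - B r. (1 - z / l)) - 1)" by (simp add: v_mult)
  also have "\<dots> \<le> v (Qp r z) * (v z / r)"
    using assms by (intro mult_left_mono prod_near_one new_factors(2)) (auto simp: B_finite)
  finally show ?thesis .
qed

definition ex :: "'k \<Rightarrow> 'k" where "ex z = expo v Lam z"

lemma Qp_conv: "\<exists>L. tends_abs v (\<lambda>n. Qp (real n) z) L \<and> conv (\<lambda>r. Qp r z) L"
proof -
  define R where "R = v z + 1"
  have R: "R > 0" "v z \<le> R" by (auto simp: R_def add_nonneg_pos)
  define C where "C = v (Qp R z)"
  have C: "C \<ge> 0" by (simp add: C_def)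
  have bnd: "v (Qp r' z - Qp r z) \<le> C * (v z / r)" if "R \<le> r" "r \<le> r'" for r r'
  proof -
    have "v (Qp r z) = C" unfolding C_def using Qp_const[OF R(2) that(1) R(1)] .
    thus ?thesis using Qp_diff[of z r r'] that R by simp
  qed
  have small: "\<exists>N. \<forall>r\<ge>N. C * (v z / r) < e \<and> R \<le> r" if e: "e > 0" for e
  proof -
    define N where "N = max R (C * v z / e + 1)"
    have "C * (v z / r) < e \<and> R \<le> r" if "r \<ge> N" for r
    proof -
      have r: "r \<ge> R" "r \<ge> C * v z / e + 1" using that by (auto simp: N_def)
      have rpos: "r > 0" using r R by linarith
      have "C * v z / e < r" using r by linarith
      hence "C * v z < e * r" using e by (simp add: divide_less_eq mult.commute)
      thus ?thesis using rpos r by (simp add: divide_less_eq)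
    qed
    thus ?thesis by blast
  qed
  have cauchy: "\<forall>e>0. \<exists>N. \<forall>m\<ge>N. \<forall>n\<ge>N. v (Qp (real m) z - Qp (real n) z) < e"
  proof (intro allI impI)
    fix e :: real assume e: "e > 0"
    obtain N where N: "\<forall>r\<ge>N. C * (v z / r) < e \<and> R \<le> r" using small[OF e] by blast
    obtain M :: nat where M: "real M \<ge> N" using real_arch_simple by blast
    show "\<exists>N. \<forall>m\<ge>N. \<forall>n\<ge>N. v (Qp (real m) z - Qp (real n) z) < e"
    proof (intro exI[of _ M] allI impI)
      fix m n :: nat assume mn: "m \<ge> M" "n \<ge> M"
      have NM: "C * (v z / real M) < e" "R \<le> real M" using N M by auto
      have a: "v (Qp (real m) z - Qp (real M) z) < e" using bnd[of "real M" "real m"] NM mn by simp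
      have b: "v (Qp (real n) z - Qp (real M) z) < e" using bnd[of "real M" "real n"] NM mn by simp
      have "v (Qp (real m) z - Qp (real n) z) = v ((Qp (real m) z - Qp (real M) z) - (Qp (real n) z - Qp (real M) z))"
        by simp
      also have "\<dots> \<le> max (v (Qp (real m) z - Qp (real M) z)) (v (Qp (real n) z - Qp (real M) z))" by (rule v_diff)
      also have "\<dots> < e" using a b by simp
      finally show "v (Qp (real m) z - Qp (real n) z) < e" .
    qed
  qed
  moreover have "(\<forall>e>0. \<exists>N. \<forall>m\<ge>N. \<forall>n\<ge>N. v (Qp (real m) z - Qp (real n) z) < e) \<longrightarrow>
      (\<exists>L. tends_abs v (\<lambda>n. Qp (real n) z) L)"
    using compl unfolding complete_abs_def by (rule spec)
  ultimately obtain L where L: "tends_abs v (\<lambda>n. Qp (real n) z) L" by blast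
  have rb: "v (Qp r z - L) \<le> C * (v z / r)" if r: "r \<ge> R" for r
  proof (rule ccontr)
    assume "\<not> ?thesis"
    hence e: "v (Qp r z - L) - C * (v z / r) > 0" by simp
    obtain N where N: "\<forall>n\<ge>N. v (Qp (real n) z - L) < v (Qp r z - L) - C * (v z / r)"
      using L e unfolding tends_abs_def by blast
    obtain n :: nat where n: "real n \<ge> r" "n \<ge> N" using real_arch_simple[of "max r (real N)"]
      by (metis max.bounded_iff of_nat_le_iff)
    have "v (Qp r z - L) = v ((Qp (real n) z - L) - (Qp (real n) z - Qp r z))" by simp
    also have "\<dots> \<le> max (v (Qp (real n) z - L)) (v (Qp (real n) z - Qp r z))" by (rule v_diff)
    also have "\<dots> < v (Qp r z - L)"
    proof -
      have nn: "C * (v z / r) \<ge> 0" using C r R by simp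
      have "v (Qp (real n) z - L) < v (Qp r z - L) - C * (v z / r)" using N n by simp
      thus ?thesis using bnd[OF r n(1)] nn e by simp
    qed
    finally show False by simp
  qed
  have "conv (\<lambda>r. Qp r z) L" unfolding conv_def
  proof (intro allI impI)
    fix e :: real assume e: "e > 0"
    obtain N where N: "\<forall>r\<ge>N. C * (v z / r) < e \<and> R \<le> r" using small[OF e] by blast
    show "\<exists>N. \<forall>r\<ge>N. v (Qp r z - L) < e"
      using N rb by (intro exI[of _ N]) (meson le_less_trans)
  qed
  thus ?thesis using L by blast
qed

lemma ex_conv: "conv (\<lambda>r. PW (B r) z) (ex z)"
proof -
  obtain L where L: "tends_abs v (\<lambda>n. Qp (real n) z) L" "conv (\<lambda>r. Qp r z) L" using Qp_conv by blast
  have "(THE P. tends_abs v (\<lambda>n. \<Prod>l\<in>{l \<in> Lam. l \<noteq> 0 \<and> v l \<le> real n}. (1 - z / l)) P) = L"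
    unfolding B_nat Qp_def[symmetric] using L(1) tends_unique by blast
  hence "ex z = z * L" unfolding ex_def expo_def by simp
  thus ?thesis unfolding PW_B using conv_mult[OF conv_const L(2)] by simp
qed

lemma ex_unique: "conv (\<lambda>r. PW (B r) z) L \<Longrightarrow> L = ex z"
  using conv_unique ex_conv by blast

lemma ex_add: "ex (x + y) = ex x + ex y"
proof -
  have "conv (\<lambda>r. PW (B r) x + PW (B r) y) (ex x + ex y)" by (rule conv_add[OF ex_conv ex_conv])
  hence "conv (\<lambda>r. PW (B r) (x + y)) (ex x + ex y)"
    by (rule conv_eventually[where R=0]) (simp add: PW_add[OF B_addsub])
  thus ?thesis using ex_unique by simp
qed

lemma ex_diff: "ex (x - y) = ex x - ex y"
  using ex_add[of "x - y" y] by simp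

lemma ex_smult: assumes "c \<in> Fq" shows "ex (c * x) = c * ex x"
proof -
  have "conv (\<lambda>r. c * PW (B r) x) (c * ex x)" by (rule conv_mult[OF conv_const ex_conv])
  hence "conv (\<lambda>r. PW (B r) (c * x)) (c * ex x)"
    by (simp add: PW_homog[OF sf B_fstable assms])
  thus ?thesis using ex_unique by simp
qed

lemma ex_v_eventually: "(\<And>r. r \<ge> R \<Longrightarrow> v (PW (B r) z) = C) \<Longrightarrow> v (ex z) = C"
  using conv_v_eventually[OF ex_conv] by blast

lemma ex_small: assumes "v z < 1" shows "v (ex z) = v z"
proof (rule ex_v_eventually)
  fix r :: real assume "r \<ge> 1"
  have "v (Qp r z) = (\<Prod>l\<in>B r - {0}. v (1 - z / l))" unfolding Qp_def by (rule v_prod)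
  also have "\<dots> = 1"
  proof (rule prod.neutral, rule ballI)
    fix l assume l: "l \<in> B r - {0}"
    hence "v l \<ge> 1" "l \<noteq> 0" using lat_v_ge1 by (auto simp: B_def)
    hence "v (z / l) < 1" using assms by (simp add: v_divide divide_less_eq)
    thus "v (1 - z / l) = 1" using v_strict_diff[of "z / l" 1] by simp
  qed
  finally show "v (PW (B r) z) = v z" by (simp add: PW_B v_mult)
qed

end

context lat
begin

lemma PW_scaleT:
  assumes "r \<ge> 0"
  shows "PW (B r) (T * z) = T * PW ((\<lambda>x. x / T) ` B r) z"
proof -
  have inj: "inj_on (\<lambda>x. x / T) (B r - {0})" using T_nz by (auto simp: inj_on_def)
  have img: "(\<lambda>x. x / T) ` B r - {0} = (\<lambda>x. x / T) ` (B r - {0})" using T_nz by auto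
  have "(\<Prod>x\<in>(\<lambda>x. x / T) ` B r - {0}. (1 - z / x)) = (\<Prod>l\<in>B r - {0}. (1 - z / (l / T)))"
    unfolding img by (rule prod.reindex_cong[OF inj]) auto
  also have "\<dots> = (\<Prod>l\<in>B r - {0}. (1 - T * z / l))"
    by (intro prod.cong refl) (simp add: field_simps)
  finally show ?thesis unfolding PW_def by (simp add: mult.assoc)
qed

lemma func_finite:
  assumes r: "r \<ge> real q ^ Suc na"
  shows "PW (B r) (T * z) = T * (PW (B (r / real q)) z *
           (\<Prod>u\<in>U3-{0}. (1 - PW (B (r / real q)) z / PW (B (r / real q)) u)))"
proof -
  have r0: "r \<ge> 0" using r qpow_pos[of "Suc na"] by linarith
  have "PW ((\<lambda>x. x / T) ` B r) z = PW (B (r / real q)) z *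
           (\<Prod>u\<in>U3-{0}. (1 - PW (B (r / real q)) z / PW (B (r / real q)) u))"
    by (rule PW_compose[OF B_addsub U3_fin decomp(2)[OF r] decomp(1)[OF r]]) (use r0 in simp)
  thus ?thesis using PW_scaleT[OF r0] by simp
qed

lemma v_one_minus: assumes "l \<in> Lam" "l \<noteq> 0" "u \<in> U3"
  shows "v (1 - u / l) = max (v l) (v u) / v l"
proof -
  have "1 - u / l = (l - u) / l" using assms(2) by (simp add: field_simps)
  thus ?thesis using v_lat_minus_U[OF assms(1,3)] by (simp add: v_divide)
qed

definition Gset :: "real \<Rightarrow> 'k set" where "Gset rho = {l \<in> Lam. l \<noteq> 0 \<and> v l < rho}"

lemma Gset_fin: "finite (Gset rho)"
  using B_finite[of rho] by (rule finite_subset[rotated]) (auto simp: Gset_def B_def)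

lemma PW_U_val:
  assumes u: "u \<in> U3" and r: "r \<ge> v u"
  shows "v (PW (B r) u) = v u * (\<Prod>l\<in>Gset (v u). v u / v l)"
proof -
  have "v (PW (B r) u) = v u * (\<Prod>l\<in>B r - {0}. v (1 - u / l))"
    unfolding PW_def by (simp add: v_mult v_prod)
  also have "(\<Prod>l\<in>B r - {0}. v (1 - u / l)) = (\<Prod>l\<in>B r - {0}. max (v l) (v u) / v l)"
    by (intro prod.cong refl) (use v_one_minus u in \<open>auto simp: B_def\<close>)
  also have "\<dots> = (\<Prod>l\<in>Gset (v u). max (v l) (v u) / v l)"
  proof (rule prod.mono_neutral_right)
    show "finite (B r - {0})" using B_finite by simp
    show "Gset (v u) \<subseteq> B r - {0}" using r by (auto simp: Gset_def B_def)
    show "\<forall>l\<in>B r - {0} - Gset (v u). max (v l) (v u) / v l = 1"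
      by (auto simp: Gset_def B_def max_def)
  qed
  also have "\<dots> = (\<Prod>l\<in>Gset (v u). v u / v l)"
    by (intro prod.cong refl) (auto simp: Gset_def max_def)
  finally show ?thesis .
qed

lemma ex_U_val:
  assumes u: "u \<in> U3"
  shows "v (ex u) = v u * (\<Prod>l\<in>Gset (v u). v u / v l)"
  by (rule ex_v_eventually[of "v u"]) (rule PW_U_val[OF u])

lemma ex_U_nz: assumes "u \<in> U3" "u \<noteq> 0" shows "ex u \<noteq> 0"
proof -
  have "v u > 0" using assms v_pos by simp
  moreover have "(\<Prod>l\<in>Gset (v u). v u / v l) > 0"
    using \<open>v u > 0\<close> by (intro prod_pos) (auto simp: Gset_def lat_v_ge1 v_pos)
  ultimately have "v (ex u) > 0" using ex_U_val[OF assms(1)] by simp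
  thus ?thesis by auto
qed

lemma func_eq: "ex (T * z) = T * (ex z * (\<Prod>u\<in>U3-{0}. (1 - ex z / ex u)))"
proof -
  have q0: "real q > 0" using q1 by simp
  have cz: "conv (\<lambda>r. PW (B (r / real q)) z) (ex z)" by (rule conv_scale[OF ex_conv q0])
  have cu: "conv (\<lambda>r. PW (B (r / real q)) u) (ex u)" for u by (rule conv_scale[OF ex_conv q0])
  have "conv (\<lambda>r. T * (PW (B (r / real q)) z * (\<Prod>u\<in>U3-{0}. (1 - PW (B (r / real q)) z / PW (B (r / real q)) u))))
      (T * (ex z * (\<Prod>u\<in>U3-{0}. (1 - ex z / ex u))))"
    by (intro conv_mult conv_const cz conv_prod conv_diff conv_div cu) (use U3_fin ex_U_nz in auto)
  hence "conv (\<lambda>r. PW (B r) (T * z)) (T * (ex z * (\<Prod>u\<in>U3-{0}. (1 - ex z / ex u))))"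
    by (rule conv_eventually[where R="real q ^ Suc na"]) (simp add: func_finite)
  thus ?thesis using ex_unique by simp
qed

end

context lat
begin

lemma ex_0: "ex 0 = 0" using ex_smult[OF F0, of 0] by simp

lemma ex_sstep: "ex ` sstep Fq W y = sstep Fq (ex ` W) (ex y)"
proof
  show "ex ` sstep Fq W y \<subseteq> sstep Fq (ex ` W) (ex y)"
  proof
    fix t assume "t \<in> ex ` sstep Fq W y"
    then obtain s where s: "s \<in> sstep Fq W y" "t = ex s" by blast
    then obtain c w where cw: "c \<in> Fq" "w \<in> W" "t = ex (c * y + w)" unfolding sstep_iff by blast
    hence "t = c * ex y + ex w" by (simp add: ex_add ex_smult)
    thus "t \<in> sstep Fq (ex ` W) (ex y)" unfolding sstep_iff using cw by blast
  qed
  show "sstep Fq (ex ` W) (ex y) \<subseteq> ex ` sstep Fq W y"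
  proof
    fix t assume "t \<in> sstep Fq (ex ` W) (ex y)"
    then obtain c w where cw: "c \<in> Fq" "w \<in> W" "t = c * ex y + ex w" unfolding sstep_iff by blast
    hence "t = ex (c * y + w)" by (simp add: ex_add ex_smult)
    moreover have "c * y + w \<in> sstep Fq W y" unfolding sstep_iff using cw by blast
    ultimately show "t \<in> ex ` sstep Fq W y" by blast
  qed
qed

lemma U3_diff: "x \<in> U3 \<Longrightarrow> y \<in> U3 \<Longrightarrow> x - y \<in> U3"
  using U_chain(10) unfolding addsub_def by (metis diff_conv_add_uminus)

lemma ex_inj_U3: "inj_on ex U3"
proof (rule inj_onI)
  fix x y assume xy: "x \<in> U3" "y \<in> U3" "ex x = ex y"
  hence "ex (x - y) = 0" by (simp add: ex_diff)
  thus "x = y" using ex_U_nz[OF U3_diff[OF xy(1,2)]] by auto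
qed

lemma ex_notin: assumes "y \<in> U3" "W \<subseteq> U3" "y \<notin> W" shows "ex y \<notin> ex ` W"
  using assms ex_inj_U3 by (auto simp: inj_on_def)

definition "Y1 = ex ` U1"
definition "Y2 = ex ` U2"
definition "Y3 = ex ` U3"

lemma Y_chain:
  "Y1 = sstep Fq {0} (ex (w1 / T))" "Y2 = sstep Fq Y1 (ex (w2 / T))" "Y3 = sstep Fq Y2 (ex (1 / T))"
  unfolding Y1_def Y2_def Y3_def U1_def U2_def U3_def by (simp_all add: ex_sstep ex_0)

lemma U_sub: "U1 \<subseteq> U3" "U2 \<subseteq> U3" "w1 / T \<in> U3" "w2 / T \<in> U3"
  using U_chain by auto

lemma Y_props:
  "\<exists>a. (\<forall>X. PW Y3 X = (\<Sum>i\<le>3. a i * X ^ (q ^ i))) \<and> a 0 = 1"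
  "card Y3 = q ^ 3" "addsub Y3"
proof -
  have a0: "addsub {0::'k}" by (simp add: addsub_def)
  have f0: "fstable Fq {0::'k}" by (simp add: fstable_def)
  have n1: "ex (w1 / T) \<notin> {0}" using ex_U_nz U_sub U_chain(15) by auto
  note P1 = sstep_props[OF a0 f0 n1, folded Y_chain(1)]
  have n2: "ex (w2 / T) \<notin> Y1" unfolding Y1_def by (rule ex_notin) (use U_sub U_chain in auto)
  note P2 = sstep_props[OF P1(3) P1(4) n2, folded Y_chain(2)]
  have n3: "ex (1 / T) \<notin> Y2" unfolding Y2_def by (rule ex_notin) (use U_sub U_chain in auto)
  note P3 = sstep_props[OF P2(3) P2(4) n3, folded Y_chain(3)]
  show "card Y3 = q ^ 3" using P1(5) P2(5) P3(5) cardF by (simp add: power3_eq_cube)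
  show "addsub Y3" using P3(3) .
  have PW0: "PW {0} X = X" for X :: 'k by (simp add: PW_def)
  have s0: "\<forall>X::'k. PW {0} X = (\<Sum>i\<le>0. (\<lambda>i. 1) i * X ^ (card Fq ^ i))" by (simp add: PW0)
  obtain b1 where b1: "\<forall>X. PW {0} X - PW {0} X ^ card Fq / PW {0} (ex (w1 / T)) ^ (card Fq - 1) =
      (\<Sum>i\<le>Suc 0. b1 i * X ^ (card Fq ^ i))" "b1 0 = 1"
    using qpoly_step[OF s0] by force
  have s1: "\<forall>X. PW Y1 X = (\<Sum>i\<le>Suc 0. b1 i * X ^ (card Fq ^ i))" using P1(8) b1(1) by simp
  obtain b2 where b2: "\<forall>X. PW Y1 X - PW Y1 X ^ card Fq / PW Y1 (ex (w2 / T)) ^ (card Fq - 1) =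
      (\<Sum>i\<le>Suc (Suc 0). b2 i * X ^ (card Fq ^ i))" "b2 0 = b1 0"
    using qpoly_step[OF s1] by blast
  have s2: "\<forall>X. PW Y2 X = (\<Sum>i\<le>Suc (Suc 0). b2 i * X ^ (card Fq ^ i))" using P2(8) b2(1) by simp
  obtain b3 where b3: "\<forall>X. PW Y2 X - PW Y2 X ^ card Fq / PW Y2 (ex (1 / T)) ^ (card Fq - 1) =
      (\<Sum>i\<le>Suc (Suc (Suc 0)). b3 i * X ^ (card Fq ^ i))" "b3 0 = b2 0"
    using qpoly_step[OF s2] by blast
  have "\<forall>X. PW Y3 X = (\<Sum>i\<le>3. b3 i * X ^ (q ^ i))" using P3(8) b3(1) cardF by (simp add: numeral_3_eq_3)
  thus "\<exists>a. (\<forall>X. PW Y3 X = (\<Sum>i\<le>3. a i * X ^ (q ^ i))) \<and> a 0 = 1" using b1 b2 b3 by auto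
qed

end

context lat
begin

lemma Y3_minus0: "Y3 - {0} = ex ` (U3 - {0})"
  unfolding Y3_def using ex_inj_U3 U3_fin ex_0 by (auto simp: inj_on_def)

lemma inj_U3m: "inj_on ex (U3 - {0})" using ex_inj_U3 by (rule inj_on_subset) auto

lemma range_ex_infinite: "infinite (range ex)"
proof -
  define g where "g n = inverse T ^ Suc n" for n :: nat
  have vg: "v (g n) = inverse (real q) ^ Suc n" for n by (simp only: g_def v_power v_inverse vT)
  have vg1: "v (g n) < 1" for n
    unfolding vg using q1 by (intro power_less_one_iff[THEN iffD2]) (auto simp: inverse_less_1_iff)
  have ginj: "inj g"
  proof (rule injI)
    fix m n assume "g m = g n"
    hence "inverse (real q) ^ Suc m = inverse (real q) ^ Suc n" using vg by metis
    hence "real q ^ Suc m = real q ^ Suc n" by (simp add: power_inverse)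
    thus "m = n" using q1 by (simp only: power_inject_exp)
  qed
  have "inj_on ex (range g)"
  proof (rule inj_onI)
    fix x y assume xy: "x \<in> range g" "y \<in> range g" "ex x = ex y"
    show "x = y"
    proof (rule ccontr)
      assume "x \<noteq> y"
      have "v (x - y) \<le> max (v x) (v y)" by (rule v_diff)
      also have "\<dots> < 1" using xy vg1 by auto
      finally have "v (ex (x - y)) = v (x - y)" by (rule ex_small)
      moreover have "ex (x - y) = 0" using xy(3) by (simp add: ex_diff)
      ultimately show False using \<open>x \<noteq> y\<close> by simp
    qed
  qed
  moreover have "infinite (range g)" using ginj by (simp add: finite_image_iff)
  ultimately have "infinite (ex ` range g)" by (simp add: finite_image_iff)
  thus ?thesis by (meson finite_subset image_mono subset_UNIV)
qed

lemma fe_unique: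
  assumes "\<forall>z. ex (T * z) = T * ex z + l1 * ex z ^ q + l2 * ex z ^ (q ^ 2) + l3 * ex z ^ (q ^ 3)"
    and "\<forall>z. ex (T * z) = T * ex z + m1 * ex z ^ q + m2 * ex z ^ (q ^ 2) + m3 * ex z ^ (q ^ 3)"
  shows "l3 = m3"
proof -
  define p where "p = monom (l1 - m1) q + monom (l2 - m2) (q ^ 2) + monom (l3 - m3) (q ^ 3)"
  have "poly p (ex z) = 0" for z
    using assms[THEN spec, of z] by (simp add: p_def poly_monom algebra_simps)
  hence "range ex \<subseteq> {x. poly p x = 0}" by auto
  have "p = 0"
  proof (rule ccontr)
    assume "p \<noteq> 0"
    hence "finite {x. poly p x = 0}" by (rule poly_roots_finite)
    thus False using \<open>range ex \<subseteq> {x. poly p x = 0}\<close> range_ex_infinite finite_subset by blast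
  qed
  hence "coeff p (q ^ 3) = 0" by simp
  moreover have "q ^ 1 \<noteq> q ^ 3" "q ^ 2 \<noteq> q ^ 3"
    using power_inject_exp[of q 1 3] power_inject_exp[of q 2 3] q2 by auto
  ultimately show ?thesis by (simp add: p_def)
qed

lemma Delta_val: "v (DeltaT q T v Lam) = real q / (\<Prod>u\<in>U3-{0}. v (ex u))"
proof -
  obtain a where a: "\<forall>X. PW Y3 X = (\<Sum>i\<le>3. a i * X ^ (q ^ i))" "a 0 = 1" using Y_props(1) by blast
  have finY: "finite Y3" "0 \<in> Y3" using Y_props(3) by (auto simp: addsub_def)
  have a3: "a 3 = (\<Prod>y\<in>Y3-{0}. - 1 / y)"
    by (rule qcoeff[OF infinite_k finY]) (use Y_props(2) a(1) cardF in auto)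
  have PWY: "PW Y3 X = X * (\<Prod>u\<in>U3-{0}. (1 - X / ex u))" for X
    unfolding PW_def Y3_minus0 by (simp add: prod.reindex[OF inj_U3m])
  have fe: "\<forall>z. ex (T * z) = T * ex z + (T * a 1) * ex z ^ q + (T * a 2) * ex z ^ (q ^ 2) + (T * a 3) * ex z ^ (q ^ 3)"
  proof
    fix z
    have "ex (T * z) = T * PW Y3 (ex z)" using func_eq PWY by simp
    also have "\<dots> = T * (\<Sum>i\<le>3. a i * ex z ^ (q ^ i))" using a(1) by simp
    finally show "ex (T * z) = T * ex z + (T * a 1) * ex z ^ q + (T * a 2) * ex z ^ (q ^ 2) + (T * a 3) * ex z ^ (q ^ 3)"
      using a(2) by (simp add: numeral_3_eq_3 numeral_2_eq_2 algebra_simps)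
  qed
  have D: "DeltaT q T v Lam = T * a 3"
    unfolding DeltaT_def ex_def[symmetric]
  proof (rule the_equality)
    show "\<exists>l1 l2. \<forall>z. ex (T * z) = T * ex z + l1 * ex z ^ q + l2 * ex z ^ (q ^ 2) + (T * a 3) * ex z ^ (q ^ 3)"
      using fe by blast
    fix l3 assume "\<exists>l1 l2. \<forall>z. ex (T * z) = T * ex z + l1 * ex z ^ q + l2 * ex z ^ (q ^ 2) + l3 * ex z ^ (q ^ 3)"
    then obtain l1 l2 where "\<forall>z. ex (T * z) = T * ex z + l1 * ex z ^ q + l2 * ex z ^ (q ^ 2) + l3 * ex z ^ (q ^ 3)" by blast
    thus "l3 = T * a 3" using fe_unique fe by blast
  qed
  have "v (DeltaT q T v Lam) = real q * (\<Prod>y\<in>Y3-{0}. inverse (v y))"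
    unfolding D a3 by (simp add: v_mult vT v_prod v_divide inverse_eq_divide)
  also have "(\<Prod>y\<in>Y3-{0}. inverse (v y)) = (\<Prod>u\<in>U3-{0}. inverse (v (ex u)))"
    unfolding Y3_minus0 by (simp add: prod.reindex[OF inj_U3m])
  also have "\<dots> = inverse (\<Prod>u\<in>U3-{0}. v (ex u))" using prod_inversef[of "\<lambda>u. v (ex u)" "U3 - {0}"] by (simp add: o_def)
  finally show ?thesis by (simp add: divide_inverse)
qed

end

context lat
begin

abbreviation lg :: "real \<Rightarrow> real" where "lg x \<equiv> log (real q) x"

lemma lg_pow [simp]: "lg (real q ^ k) = real k"
  using q1 by (simp add: log_nat_power)

lemma lg_q [simp]: "lg (real q) = 1" using q1 by simp

lemma lg_prod: "(\<And>i. i \<in> I \<Longrightarrow> f i > 0) \<Longrightarrow> lg (\<Prod>i\<in>I. f i) = (\<Sum>i\<in>I. lg (f i))"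
proof (induction I rule: infinite_finite_induct)
  case (insert x F)
  have "lg (f x * prod f F) = lg (f x) + lg (prod f F)"
    using insert q1 by (intro log_mult_pos) (auto intro: prod_pos)
  thus ?case using insert by simp
qed auto

lemma lg_ex:
  assumes "u \<in> U3" "u \<noteq> 0"
  shows "lg (v (ex u)) = lg (v u) + (\<Sum>l\<in>Gset (v u). (lg (v u) - lg (v l)))"
proof -
  have vu: "v u > 0" using assms v_pos by simp
  have pos: "v l > 0" if "l \<in> Gset (v u)" for l using that lat_v_ge1 by (force simp: Gset_def)
  have "lg (v (ex u)) = lg (v u) + lg (\<Prod>l\<in>Gset (v u). v u / v l)"
    unfolding ex_U_val[OF assms(1)] using vu pos q1 by (intro log_mult_pos) (auto intro!: prod_pos)
  also have "lg (\<Prod>l\<in>Gset (v u). v u / v l) = (\<Sum>l\<in>Gset (v u). lg (v u / v l))"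
    using pos vu by (intro lg_prod) auto
  also have "\<dots> = (\<Sum>l\<in>Gset (v u). (lg (v u) - lg (v l)))"
    using pos vu by (intro sum.cong refl log_divide_pos) auto
  finally show ?thesis .
qed

lemma Gset_small: "rho \<le> 1 \<Longrightarrow> Gset rho = {}"
  using lat_v_ge1 by (force simp: Gset_def)

lemma lat_v_pow': "l \<in> Lam \<Longrightarrow> l \<noteq> 0 \<Longrightarrow> \<exists>k. v l = real q ^ k \<and> lg (v l) = real k"
  using lat_v_pow by fastforce

lemma qpow_less_iff: "real q ^ k < real q ^ m \<longleftrightarrow> k < m" using q1 by simp
lemma qpow_le_iff: "real q ^ k \<le> real q ^ m \<longleftrightarrow> k \<le> m" using q1 by simp

lemma Gset_Suc: "Gset (real q ^ Suc m) = B (real q ^ m) - {0}"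
proof -
  have "v l < real q ^ Suc m \<longleftrightarrow> v l \<le> real q ^ m" if l: "l \<in> Lam" "l \<noteq> 0" for l
  proof -
    obtain k where "v l = real q ^ k" using lat_v_pow[OF l] by blast
    thus ?thesis by (simp only: qpow_less_iff qpow_le_iff) auto
  qed
  thus ?thesis by (auto simp: Gset_def B_def)
qed

definition H :: "nat \<Rightarrow> real" where
  "H m = (\<Sum>l\<in>Gset (real q ^ m). (real m - lg (v l)))"

lemma H_0: "H 0 = 0" unfolding H_def using Gset_small[of 1] by simp

lemma H_Suc: "H (Suc m) = H m + (real (card (B (real q ^ m))) - 1)"
proof -
  have fin: "finite (B (real q ^ m) - {0})" using B_finite by simp
  have "H (Suc m) = (\<Sum>l\<in>B (real q ^ m) - {0}. (1 + (real m - lg (v l))))"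
    unfolding H_def Gset_Suc by (intro sum.cong refl) simp
  also have "\<dots> = real (card (B (real q ^ m) - {0})) + (\<Sum>l\<in>B (real q ^ m) - {0}. (real m - lg (v l)))"
    by (simp add: sum.distrib)
  also have "(\<Sum>l\<in>B (real q ^ m) - {0}. (real m - lg (v l))) = H m"
    unfolding H_def
  proof (rule sum.mono_neutral_right[OF fin])
    show "Gset (real q ^ m) \<subseteq> B (real q ^ m) - {0}" by (auto simp: Gset_def B_def)
    show "\<forall>l\<in>B (real q ^ m) - {0} - Gset (real q ^ m). real m - lg (v l) = 0"
    proof
      fix l assume l: "l \<in> B (real q ^ m) - {0} - Gset (real q ^ m)"
      hence "l \<in> Lam" "l \<noteq> 0" "v l \<le> real q ^ m" "\<not> v l < real q ^ m" by (auto simp: Gset_def B_def)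
      hence "v l = real q ^ m" by simp
      thus "real m - lg (v l) = 0" by simp
    qed
  qed
  also have "card (B (real q ^ m) - {0}) = card (B (real q ^ m)) - 1"
    using B_finite lat_0 by (simp add: B_def)
  moreover have "card (B (real q ^ m)) \<ge> 1" using B_finite lat_0
    by (metis (no_types, lifting) B_def One_nat_def Suc_leI card_gt_0_iff empty_iff mem_Collect_eq qpow_pos v_0 less_imp_le)
  ultimately show ?thesis by (simp add: of_nat_diff)
qed

lemma a1_zero:
  assumes "a1 \<in> A" "a2 \<in> A" "a3 \<in> A" "v (a1 * w1 + a2 * w2 + a3) \<le> real q ^ j" "j < na"
  shows "a1 = 0"
proof (rule ccontr)
  assume "a1 \<noteq> 0"
  hence "v a1 * real q ^ na \<ge> 1 * real q ^ na" using A_v_ge1[OF assms(1)] by (intro mult_right_mono) auto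
  moreover have "v a1 * real q ^ na \<le> real q ^ j" using v_lat[OF assms(1-3)] assms(4) by simp
  ultimately have "real q ^ na \<le> real q ^ j" by simp
  thus False using assms(5) qpow_le_iff[of na j] by simp
qed

lemma card_B_case2:
  assumes "nb = 0" "j < na"
  shows "card (B (real q ^ j)) = q ^ (2 * Suc j)"
proof -
  have eq: "B (real q ^ j) = (\<lambda>(x, y). x * w2 + y) ` (Ad j \<times> Ad j)"
  proof
    show "B (real q ^ j) \<subseteq> (\<lambda>(x, y). x * w2 + y) ` (Ad j \<times> Ad j)"
    proof
      fix l assume "l \<in> B (real q ^ j)"
      then obtain a1 a2 a3 where a: "a1 \<in> A" "a2 \<in> A" "a3 \<in> A" "l = a1 * w1 + a2 * w2 + a3" "v l \<le> real q ^ j"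
        unfolding B_def lat_iff by blast
      have "a1 = 0" using a1_zero a assms by blast
      moreover have "max (v a1 * real q ^ na) (max (v a2) (v a3)) \<le> real q ^ j"
        using v_lat[OF a(1-3)] a assms by simp
      ultimately show "l \<in> (\<lambda>(x, y). x * w2 + y) ` (Ad j \<times> Ad j)" using a by (force simp: Ad_def)
    qed
    show "(\<lambda>(x, y). x * w2 + y) ` (Ad j \<times> Ad j) \<subseteq> B (real q ^ j)"
    proof clarify
      fix x y assume xy: "x \<in> Ad j" "y \<in> Ad j"
      hence "x * w2 + y = 0 * w1 + x * w2 + y" by simp
      moreover have "v (0 * w1 + x * w2 + y) = max (v x) (v y)"
        using v_lat[OF A_0, of x y] xy assms by (auto simp: Ad_def qpow_pos max_def)
      ultimately show "x * w2 + y \<in> B (real q ^ j)" using xy A_0 unfolding B_def lat_iff Ad_def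
        by (metis (mono_tags, lifting) max.bounded_iff mem_Collect_eq)
    qed
  qed
  have inj: "inj_on (\<lambda>(x, y). x * w2 + y) (Ad j \<times> Ad j)"
  proof (rule inj_onI, clarify)
    fix x y x' y' assume "x \<in> Ad j" "y \<in> Ad j" "x' \<in> Ad j" "y' \<in> Ad j" "x * w2 + y = x' * w2 + y'"
    thus "x = x' \<and> y = y'" using coord_unique[OF A_0 _ _ A_0, of x y x' y'] by (auto simp: Ad_def)
  qed
  show ?thesis unfolding eq using card_image[OF inj] Ad_card
    by (simp add: card_cartesian_product power_add[symmetric] mult_2)
qed

lemma card_B_case3:
  assumes "j < nb"
  shows "card (B (real q ^ j)) = q ^ Suc j"
proof -
  have "B (real q ^ j) = Ad j"
  proof
    show "B (real q ^ j) \<subseteq> Ad j"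
    proof
      fix l assume "l \<in> B (real q ^ j)"
      then obtain a1 a2 a3 where a: "a1 \<in> A" "a2 \<in> A" "a3 \<in> A" "l = a1 * w1 + a2 * w2 + a3" "v l \<le> real q ^ j"
        unfolding B_def lat_iff by blast
      have "a1 = 0" using a1_zero a assms nab by (meson less_le_trans)
      moreover have "a2 = 0"
      proof (rule ccontr)
        assume "a2 \<noteq> 0"
        hence "v a2 * real q ^ nb \<ge> 1 * real q ^ nb" using A_v_ge1[OF a(2)] by (intro mult_right_mono) auto
        moreover have "v a2 * real q ^ nb \<le> real q ^ j" using v_lat[OF a(1-3)] a by simp
        ultimately have "real q ^ nb \<le> real q ^ j" by simp
        thus False using assms qpow_le_iff[of nb j] by simp
      qed
      ultimately show "l \<in> Ad j" using a by (simp add: Ad_def)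
    qed
    show "Ad j \<subseteq> B (real q ^ j)"
    proof
      fix x assume x: "x \<in> Ad j"
      have "x = 0 * w1 + 0 * w2 + x" by simp
      thus "x \<in> B (real q ^ j)" using x A_0 unfolding B_def lat_iff Ad_def by blast
    qed
  qed
  thus ?thesis using Ad_card by simp
qed

lemma H_case2: "nb = 0 \<Longrightarrow> m \<le> na \<Longrightarrow> H m = (\<Sum>j<m. (real q ^ (2 * Suc j) - 1))"
proof (induction m)
  case 0 thus ?case by (simp add: H_0)
next
  case (Suc m)
  thus ?case using card_B_case2[of m] by (simp add: H_Suc)
qed

lemma H_case3: "m \<le> nb \<Longrightarrow> H m = (\<Sum>j<m. (real q ^ Suc j - 1))"
proof (induction m)
  case 0 thus ?case by (simp add: H_0)
next
  case (Suc m)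
  thus ?case using card_B_case3[of m] by (simp add: H_Suc)
qed

end

lemma alg2:
  fixes Q X K :: real
  assumes d: "Q^2 - 1 \<noteq> 0" and k: "(Q^2 - 1) * K = Q^2 * (X - 1)"
  shows "Q^2 - (Q^3 - Q^2) * K = Q^5 * X - (Q^3 - 1) * Q^2 * (Q^2 * X - 1) / (Q^2 - 1)"
proof -
  have "(Q^2 - (Q^3 - Q^2) * K) * (Q^2 - 1) = Q^2 * (Q^2 - 1) - (Q^3 - Q^2) * ((Q^2 - 1) * K)" by algebra
  also have "\<dots> = Q^2 * (Q^2 - 1) - (Q^3 - Q^2) * (Q^2 * (X - 1))" using k by simp
  also have "\<dots> = Q^5 * X * (Q^2 - 1) - (Q^3 - 1) * Q^2 * (Q^2 * X - 1)" by algebra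
  finally have h: "(Q^2 - (Q^3 - Q^2) * K) * (Q^2 - 1) = Q^5 * X * (Q^2 - 1) - (Q^3 - 1) * Q^2 * (Q^2 * X - 1)" .
  have "Q^2 - (Q^3 - Q^2) * K = (Q^5 * X * (Q^2 - 1) - (Q^3 - 1) * Q^2 * (Q^2 * X - 1)) / (Q^2 - 1)"
    by (metis h nonzero_mult_div_cancel_right d)
  also have "\<dots> = Q^5 * X - (Q^3 - 1) * Q^2 * (Q^2 * X - 1) / (Q^2 - 1)"
    using d by (simp add: diff_divide_distrib)
  finally show ?thesis .
qed
lemma alg3:
  fixes Q X K :: real
  assumes d: "Q - 1 \<noteq> 0" and k: "(Q - 1) * K = Q * (X - 1)"
  shows "Q - (Q^3 - Q) * K = Q^3 - (Q * X - 1) * (Q^2 + Q)"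
proof -
  have "(Q - (Q^3 - Q) * K) * (Q - 1) = Q * (Q - 1) - (Q^3 - Q) * ((Q - 1) * K)" by algebra
  also have "\<dots> = Q * (Q - 1) - (Q^3 - Q) * (Q * (X - 1))" using k by simp
  also have "\<dots> = (Q^3 - (Q * X - 1) * (Q^2 + Q)) * (Q - 1)" by algebra
  finally show ?thesis using d by simp
qed
context lat
begin

lemma lg_Delta: "lg (v (DeltaT q T v Lam)) = 1 - (\<Sum>u\<in>U3-{0}. lg (v (ex u)))"
proof -
  have pos: "v (ex u) > 0" if "u \<in> U3 - {0}" for u using ex_U_nz that v_pos by auto
  have P: "(\<Prod>u\<in>U3-{0}. v (ex u)) > 0" using pos by (intro prod_pos) auto
  have "lg (v (DeltaT q T v Lam)) = lg (real q) - lg (\<Prod>u\<in>U3-{0}. v (ex u))"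
    unfolding Delta_val using P q1 by (intro log_divide_pos) auto
  also have "lg (\<Prod>u\<in>U3-{0}. v (ex u)) = (\<Sum>u\<in>U3-{0}. lg (v (ex u)))" using pos by (intro lg_prod) auto
  finally show ?thesis by simp
qed

lemma lg_ex_big: assumes "u \<in> U3" "v u = real q ^ k" shows "lg (v (ex u)) = real k + H k"
proof -
  have "u \<noteq> 0" using assms qpow_pos[of k] by auto
  thus ?thesis using lg_ex[OF assms(1)] assms(2) by (simp add: H_def)
qed

lemma lg_ex_small: assumes "u \<in> U3" "u \<noteq> 0" "v u = 1 / real q" shows "lg (v (ex u)) = -1"
proof -
  have "Gset (v u) = {}" using assms(3) q1 by (intro Gset_small) simp
  thus ?thesis using lg_ex[OF assms(1,2)] assms(3) q1 by (simp add: log_divide)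
qed

lemma sum_split:
  assumes S: "S \<subseteq> U3" "0 \<in> S" and big: "\<And>u. u \<in> U3 - S \<Longrightarrow> lg (v (ex u)) = K"
    and small: "\<And>u. u \<in> S - {0} \<Longrightarrow> lg (v (ex u)) = -1"
  shows "(\<Sum>u\<in>U3-{0}. lg (v (ex u))) = real (card U3 - card S) * K - (real (card S) - 1)"
proof -
  have fin: "finite U3" using U3_fin by simp
  have finS: "finite S" using finite_subset[OF S(1) fin] .
  have "U3 - {0} = (U3 - S) \<union> (S - {0})" using S by auto
  hence "(\<Sum>u\<in>U3-{0}. lg (v (ex u))) = (\<Sum>u\<in>(U3 - S) \<union> (S - {0}). lg (v (ex u)))" by simp
  also have "\<dots> = (\<Sum>u\<in>U3 - S. lg (v (ex u))) + (\<Sum>u\<in>S - {0}. lg (v (ex u)))"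
    by (rule sum.union_disjoint) (use fin finS in auto)
  also have "(\<Sum>u\<in>U3 - S. lg (v (ex u))) = real (card (U3 - S)) * K" using big by simp
  also have "(\<Sum>u\<in>S - {0}. lg (v (ex u))) = - real (card (S - {0}))" using small by simp
  also have "card (U3 - S) = card U3 - card S" using S finS by (simp add: card_Diff_subset)
  also have "card (S - {0}) = card S - 1" using S finS by simp
  also have "real (card S - 1) = real (card S) - 1" using S finS
    by (metis card_0_eq empty_iff Suc_leI card_gt_0_iff of_nat_diff of_nat_1 One_nat_def)
  finally show ?thesis by simp
qed

definition chi :: "'k \<Rightarrow> real" where "chi c = (if c = 0 then 0 else 1)"

lemma v_ucomb_chi: "c1 \<in> Fq \<Longrightarrow> c2 \<in> Fq \<Longrightarrow> c3 \<in> Fq \<Longrightarrow>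
  v (ucomb c1 c2 c3) = max (chi c1 * real q ^ na) (max (chi c2 * real q ^ nb) (chi c3)) / real q"
  using v_ucomb v_Fq by (simp add: chi_def)

lemma max3_eq: "(a::real) \<le> M \<Longrightarrow> b \<le> M \<Longrightarrow> c \<le> M \<Longrightarrow> a = M \<or> b = M \<Longrightarrow> max a (max b c) = M"
  by (auto simp: max_def)

lemma chi_le: "chi c \<le> 1" "chi c \<ge> 0" by (auto simp: chi_def)

lemma chi_mult_le: "chi c * real q ^ k \<le> real q ^ k" using chi_le[of c] qpow_pos[of k] by (simp add: mult_left_le_one_le)

lemma max2_one: "(a::real) \<le> 1 \<Longrightarrow> b \<le> 1 \<Longrightarrow> a = 1 \<or> b = 1 \<Longrightarrow> max a b = 1"
  by (auto simp: max_def)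

lemma ucomb_000: "ucomb 0 0 0 = 0" by (simp add: ucomb_def)

lemma card_U3: "card U3 = q ^ 3" using U_chain(12) by (simp add: power3_eq_cube)

lemma case1: assumes "na = 0" "nb = 0" shows "lg (v (DeltaT q T v Lam)) = real q ^ 3"
proof -
  have "(\<Sum>u\<in>U3-{0}. lg (v (ex u))) = real (card U3 - card U3) * 0 - (real (card U3) - 1)"
  proof (rule sum_split)
    fix u assume u: "u \<in> U3 - {0}"
    then obtain c1 c2 c3 where c: "c1 \<in> Fq" "c2 \<in> Fq" "c3 \<in> Fq" "u = ucomb c1 c2 c3" using U3_mem by blast
    have "\<not> (c1 = 0 \<and> c2 = 0 \<and> c3 = 0)" using u c by (auto simp: ucomb_def)
    hence "max (chi c1) (max (chi c2) (chi c3)) = 1"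
      by (intro max2_one chi_le) (auto simp: chi_def max_def)
    hence "v u = 1 / real q" using v_ucomb_chi[OF c(1-3)] c assms by simp
    thus "lg (v (ex u)) = -1" using lg_ex_small u by auto
  qed (use U3_fin in auto)
  thus ?thesis using lg_Delta card_U3 by simp
qed

lemma geo: "((y::real) - 1) * (\<Sum>j<m. y ^ Suc j) = y * (y ^ m - 1)"
  by (induction m) (simp_all add: algebra_simps)

lemma geo1: "(real q - 1) * (\<Sum>j<m. real q ^ Suc j) = real q * (real q ^ m - 1)"
  by (rule geo)

lemma geo2: "(real q ^ 2 - 1) * (\<Sum>j<m. real q ^ (2 * Suc j)) = real q ^ 2 * (real q ^ (2 * m) - 1)"
  using geo[of "real q ^ 2" m] by (simp only: power_mult)

lemma case2: assumes "nb = 0" "na > 0"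
  shows "lg (v (DeltaT q T v Lam)) = real q ^ (2 * na + 3)
              - (real q ^ 3 - 1) * real q ^ 2 * (real q ^ (2 * na) - 1) / (real q ^ 2 - 1)"
proof -
  obtain m where m: "na = Suc m" using assms(2) by (cases na) auto
  define S where "S = (\<lambda>(c2, c3). ucomb 0 c2 c3) ` (Fq \<times> Fq)"
  define K where "K = real m + H m"
  have SU: "S \<subseteq> U3"
  proof
    fix u assume "u \<in> S"
    then obtain a b where ab: "a \<in> Fq" "b \<in> Fq" "u = ucomb 0 a b" unfolding S_def by auto
    show "u \<in> U3" unfolding U3_mem using F0 ab by blast
  qed
  have S0: "0 \<in> S" unfolding S_def using F0 ucomb_000 by (metis (no_types, lifting) SigmaI case_prod_conv image_eqI)
  have injS: "inj_on (\<lambda>(c2, c3). ucomb 0 c2 c3) (Fq \<times> Fq)"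
    by (rule inj_onI) (use ucomb_inj F0 in auto)
  have cS: "card S = q ^ 2" unfolding S_def using card_image[OF injS] cardF
    by (simp add: card_cartesian_product power2_eq_square)
  have sum: "(\<Sum>u\<in>U3-{0}. lg (v (ex u))) = real (card U3 - card S) * K - (real (card S) - 1)"
  proof (rule sum_split[OF SU S0])
    fix u assume u: "u \<in> U3 - S"
    then obtain c1 c2 c3 where c: "c1 \<in> Fq" "c2 \<in> Fq" "c3 \<in> Fq" "u = ucomb c1 c2 c3" using U3_mem by blast
    have "c1 \<noteq> 0"
    proof
      assume "c1 = 0"
      hence "u \<in> S" unfolding S_def using c by (metis (no_types, lifting) SigmaI case_prod_conv image_eqI)
      thus False using u by simp
    qed
    have "max (chi c1 * real q ^ na) (max (chi c2 * real q ^ nb) (chi c3)) = real q ^ na"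
    proof (rule max3_eq)
      show "chi c1 * real q ^ na \<le> real q ^ na" by (rule chi_mult_le)
      show "chi c2 * real q ^ nb \<le> real q ^ na" using chi_mult_le[of c2 nb] qna_le by linarith
      show "chi c3 \<le> real q ^ na" using chi_le[of c3] qpow_ge1[of na] by linarith
      show "chi c1 * real q ^ na = real q ^ na \<or> chi c2 * real q ^ nb = real q ^ na"
        using \<open>c1 \<noteq> 0\<close> by (simp add: chi_def)
    qed
    hence "v u = real q ^ na / real q" using v_ucomb_chi[OF c(1-3)] c by simp
    hence "v u = real q ^ m" using m q1 by simp
    thus "lg (v (ex u)) = K" using lg_ex_big u by (simp add: K_def)
  next
    fix u assume u: "u \<in> S - {0}"
    then obtain c2 c3 where c: "c2 \<in> Fq" "c3 \<in> Fq" "u = ucomb 0 c2 c3" unfolding S_def by auto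
    have "\<not> (c2 = 0 \<and> c3 = 0)" using u c by (auto simp: ucomb_def)
    hence "max (chi c2) (chi c3) = 1" by (intro max2_one chi_le) (auto simp: chi_def)
    moreover have "chi (0::'k) = 0" by (simp add: chi_def)
    ultimately have "v u = 1 / real q" using v_ucomb_chi[OF F0 c(1-2)] c assms chi_le[of c2] chi_le[of c3] by simp
    thus "lg (v (ex u)) = -1" using lg_ex_small u SU by auto
  qed
  have K: "(real q ^ 2 - 1) * K = real q ^ 2 * (real q ^ (2 * m) - 1)"
  proof -
    have Hm: "H m = (\<Sum>j<m. (real q ^ (2 * Suc j) - 1))" by (rule H_case2[OF assms(1)]) (use m in simp)
    have "K = (\<Sum>j<m. real q ^ (2 * Suc j))" unfolding K_def Hm by (simp add: sum_subtractf)
    thus ?thesis using geo2 by simp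
  qed
  have q21: "real q ^ 2 - 1 \<noteq> 0" using one_less_power[OF q1, of 2] by simp
  have le: "q ^ 2 \<le> q ^ 3" by (rule power_increasing) (use q2 in auto)
  have card: "real (card U3 - card S) = real q ^ 3 - real q ^ 2"
    using card_U3 cS le by (simp add: of_nat_diff)
  have "lg (v (DeltaT q T v Lam)) = real q ^ 2 - (real q ^ 3 - real q ^ 2) * K"
    using lg_Delta sum card cS by simp
  also have "\<dots> = real q ^ (2 * na + 3)
              - (real q ^ 3 - 1) * real q ^ 2 * (real q ^ (2 * na) - 1) / (real q ^ 2 - 1)"
  proof -
    define X where "X = real q ^ (2 * m)"
    have n1: "2 * na + 3 = 5 + 2 * m" "2 * na = 2 + 2 * m" using m by simp_all
    have e1: "real q ^ (2 * na + 3) = real q ^ 5 * X" unfolding X_def n1(1) by (simp only: power_add)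
    have e2: "real q ^ (2 * na) = real q ^ 2 * X" unfolding X_def n1(2) by (simp only: power_add)
    show ?thesis unfolding e1 e2 by (rule alg2[OF q21]) (use K in \<open>simp add: X_def\<close>)
  qed
  finally show ?thesis .
qed

lemma case3: assumes "nb = na" "na > 0"
  shows "lg (v (DeltaT q T v Lam)) = real q ^ 3 - (real q ^ na - 1) * (real q ^ 2 + real q)"
proof -
  obtain m where m: "na = Suc m" using assms(2) by (cases na) auto
  define S where "S = (\<lambda>c3. ucomb 0 0 c3) ` Fq"
  define K where "K = real m + H m"
  have SU: "S \<subseteq> U3"
  proof
    fix u assume "u \<in> S"
    then obtain b where ab: "b \<in> Fq" "u = ucomb 0 0 b" unfolding S_def by auto
    show "u \<in> U3" unfolding U3_mem using F0 ab by blast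
  qed
  have S0: "0 \<in> S" unfolding S_def using F0 ucomb_000 by (metis image_eqI)
  have injS: "inj_on (\<lambda>c3. ucomb 0 0 c3) Fq"
    by (rule inj_onI) (use ucomb_inj F0 in auto)
  have cS: "card S = q" unfolding S_def using card_image[OF injS] cardF by simp
  have sum: "(\<Sum>u\<in>U3-{0}. lg (v (ex u))) = real (card U3 - card S) * K - (real (card S) - 1)"
  proof (rule sum_split[OF SU S0])
    fix u assume u: "u \<in> U3 - S"
    then obtain c1 c2 c3 where c: "c1 \<in> Fq" "c2 \<in> Fq" "c3 \<in> Fq" "u = ucomb c1 c2 c3" using U3_mem by blast
    have "c1 \<noteq> 0 \<or> c2 \<noteq> 0"
    proof (rule ccontr)
      assume "\<not> (c1 \<noteq> 0 \<or> c2 \<noteq> 0)"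
      hence "u \<in> S" unfolding S_def using c by blast
      thus False using u by simp
    qed
    have "max (chi c1 * real q ^ na) (max (chi c2 * real q ^ nb) (chi c3)) = real q ^ na"
    proof (rule max3_eq)
      show "chi c1 * real q ^ na \<le> real q ^ na" by (rule chi_mult_le)
      show "chi c2 * real q ^ nb \<le> real q ^ na" using chi_mult_le[of c2 nb] qna_le by linarith
      show "chi c3 \<le> real q ^ na" using chi_le[of c3] qpow_ge1[of na] by linarith
      show "chi c1 * real q ^ na = real q ^ na \<or> chi c2 * real q ^ nb = real q ^ na"
        using \<open>c1 \<noteq> 0 \<or> c2 \<noteq> 0\<close> assms(1) by (auto simp: chi_def)
    qed
    hence "v u = real q ^ na / real q" using v_ucomb_chi[OF c(1-3)] c by simp
    hence "v u = real q ^ m" using m q1 by simp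
    thus "lg (v (ex u)) = K" using lg_ex_big u by (simp add: K_def)
  next
    fix u assume u: "u \<in> S - {0}"
    then obtain c3 where c: "c3 \<in> Fq" "u = ucomb 0 0 c3" unfolding S_def by blast
    have "c3 \<noteq> 0" using u c by (auto simp: ucomb_def)
    hence "chi c3 = 1" by (simp add: chi_def)
    moreover have "chi (0::'k) = 0" by (simp add: chi_def)
    ultimately have "v u = 1 / real q" using v_ucomb_chi[OF F0 F0 c(1)] c by simp
    thus "lg (v (ex u)) = -1" using lg_ex_small u SU by auto
  qed
  have K: "(real q - 1) * K = real q * (real q ^ m - 1)"
  proof -
    have Hm: "H m = (\<Sum>j<m. (real q ^ Suc j - 1))" by (rule H_case3) (use m assms(1) in simp)
    have "K = (\<Sum>j<m. real q ^ Suc j)" unfolding K_def Hm by (simp add: sum_subtractf)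
    thus ?thesis using geo1 by simp
  qed
  have q11: "real q - 1 \<noteq> 0" using q1 by simp
  have le: "q ^ 1 \<le> q ^ 3" by (rule power_increasing) (use q2 in auto)
  have card: "real (card U3 - card S) = real q ^ 3 - real q"
    using card_U3 cS le by (simp add: of_nat_diff)
  have "lg (v (DeltaT q T v Lam)) = real q - (real q ^ 3 - real q) * K"
    using lg_Delta sum card cS by simp
  also have "\<dots> = real q ^ 3 - (real q ^ na - 1) * (real q ^ 2 + real q)"
  proof -
    define X where "X = real q ^ m"
    have e1: "real q ^ na = real q * X" unfolding X_def m by (simp only: power_Suc)
    show ?thesis unfolding e1 by (rule alg3[OF q11]) (use K in \<open>simp add: X_def\<close>)
  qed
  finally show ?thesis .
qed

end

theorem mainTheorem16:
  fixes Fq :: "'k::field set" and q :: nat and T w1 w2 :: 'k and v :: "'k \<Rightarrow> real"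
    and a b :: int
  assumes model: "Cinf_model Fq q T v"
    and orth: "orthogonal3 Fq T v w1 w2 1"
    and le12: "v w1 \<ge> v w2" and ge1: "v w2 \<ge> 1"
    and a_def: "logq q v w1 = real_of_int a" and b_def: "logq q v w2 = real_of_int b"
  shows "(a = 0 \<and> b = 0 \<longrightarrow>
            logq q v (DeltaT q T v (lattice3 Fq T w1 w2)) = real q ^ 3)
       \<and> (a > b \<and> b = 0 \<longrightarrow>
            logq q v (DeltaT q T v (lattice3 Fq T w1 w2)) =
              real q ^ (2 * nat a + 3)
              - (real q ^ 3 - 1) * real q ^ 2 * (real q ^ (2 * nat a) - 1) / (real q ^ 2 - 1))
       \<and> (a = b \<and> b > 0 \<longrightarrow>
            logq q v (DeltaT q T v (lattice3 Fq T w1 w2)) =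
              real q ^ 3 - (real q ^ nat a - 1) * (real q ^ 2 + real q))"
proof -
  interpret cm Fq q T v by unfold_locales (rule model)
  have la: "log (real q) (v w1) = real_of_int a" using a_def by (simp add: logq_def)
  have lb: "log (real q) (v w2) = real_of_int b" using b_def by (simp add: logq_def)
  have p1: "v w1 > 0" "v w2 > 0" using le12 ge1 by linarith+
  have a0: "a \<ge> 0"
  proof -
    have "log (real q) (v w1) \<ge> 0" using le12 ge1 q1 by simp
    thus ?thesis using la by simp
  qed
  have b0: "b \<ge> 0"
  proof -
    have "log (real q) (v w2) \<ge> 0" using ge1 q1 by simp
    thus ?thesis using lb by simp
  qed
  have ba: "b \<le> a"
  proof -
    have "log (real q) (v w2) \<le> log (real q) (v w1)" using le12 p1 q1 by simp
    thus ?thesis using la lb by simp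
  qed
  have vw1: "v w1 = real q ^ nat a"
  proof -
    have "v w1 = real q powr (log (real q) (v w1))" using p1 q1 by simp
    also have "\<dots> = real q powr (real (nat a))" using la a0 by simp
    also have "\<dots> = real q ^ nat a" using q1 by (simp add: powr_realpow)
    finally show ?thesis .
  qed
  have vw2: "v w2 = real q ^ nat b"
  proof -
    have "v w2 = real q powr (log (real q) (v w2))" using p1 q1 by simp
    also have "\<dots> = real q powr (real (nat b))" using lb b0 by simp
    also have "\<dots> = real q ^ nat b" using q1 by (simp add: powr_realpow)
    finally show ?thesis .
  qed
  interpret L: lat Fq q T v w1 w2 "nat a" "nat b"
    by unfold_locales (use orth vw1 vw2 ba in auto)
  have lg: "logq q v (DeltaT q T v (lattice3 Fq T w1 w2)) = log (real q) (v (DeltaT q T v (lattice3 Fq T w1 w2)))"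
    by (simp add: logq_def)
  show ?thesis
  proof (intro conjI impI)
    assume "a = 0 \<and> b = 0"
    thus "logq q v (DeltaT q T v (lattice3 Fq T w1 w2)) = real q ^ 3" using L.case1 lg by simp
  next
    assume h: "a > b \<and> b = 0"
    hence "nat b = 0" "nat a > 0" by auto
    thus "logq q v (DeltaT q T v (lattice3 Fq T w1 w2)) =
              real q ^ (2 * nat a + 3)
              - (real q ^ 3 - 1) * real q ^ 2 * (real q ^ (2 * nat a) - 1) / (real q ^ 2 - 1)"
      using L.case2 lg by simp
  next
    assume h: "a = b \<and> b > 0"
    hence "nat b = nat a" "nat a > 0" by auto
    thus "logq q v (DeltaT q T v (lattice3 Fq T w1 w2)) =
              real q ^ 3 - (real q ^ nat a - 1) * (real q ^ 2 + real q)"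
      using L.case3 lg by simp
  qed
qed

end
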